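(* Let $(X,d)$ be a complete doubling metric space. Let $(\delta_n)_{n\in\mathbb{N}}$ and $(\gamma_n)_{n\in\mathbb{N}}$ be decreasing sequences of positive reals with $\delta_n\le\gamma_n$ for all $n$, $\lim_{n\to\infty}\gamma_n=0$, $\lim_{n\to\infty}\log\delta_n/\log\delta_{n+1}=1$ and $\lim_{n\to\infty}\log\gamma_n/\log\delta_n=1$. For each $n\in\mathbb{N}$ let $\mathcal{Q}_n$ be a collection of pairwise disjoint Borel subsets of $X$ such that each $Q\in\mathcal{Q}_n$ contains a closed ball of radius $\delta_n$ and is contained in a closed ball of radius $\gamma_n$, and let $E=\bigcap_{n=1}^\infty\bigcup_{Q\in\mathcal{Q}_n}Q$. For $x\in X$ and $r>0$ let $\mathcal{Q}_n(x,r)=\{Q\in\mathcal{Q}_n: Q\cap B(x,r)\neq\emptyset\}$. Let $\mu$ be a non-atomic measure supported on $E$ and let $q\ge0$. Then for all $x\in\mathrm{spt}(\mu)$, \[ \tau_q(\mu,x)=\lim_{r\downarrow0}\liminf_{n\to\infty}\frac{\log\sum_{Q\in\mathcal{Q}_n(x,r)}\mu(Q)^q}{\log\delta_n}. \]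
   Context: A metric space is doubling if there is an integer $N$ such that every closed ball $B(x,r)$ can be covered by $N$ closed balls of radius $r/2$. A "measure" means a nontrivial Borel regular outer measure defined on all subsets, finite on bounded sets; $\mathrm{spt}(\mu)$ is its support. A packing is a countable collection of pairwise disjoint closed balls; a $\delta$-packing of $A$ is a packing by balls of radius $\delta$ with centers in $A$. For compact $A\subset X$, $q\ge0$, $\delta>0$: $S_q(\mu,A,\delta)=\sup\{\sum_{B\in\mathcal{B}}\mu(B)^q:\mathcal{B}$ is a $\delta$-packing of $A\cap\mathrm{spt}(\mu)\}$ (with $0^q=0$ also for $q=0$), and the local $L^q$-spectrum is $\tau_q(\mu,x)=\lim_{r\downarrow0}\liminf_{\delta\downarrow0}\log S_q(\mu,B(x,r),\delta)/\log\delta$. *)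

theory Defs
  imports "HOL-Analysis.Analysis"
begin

definition doubling_space :: "'a::metric_space itself \<Rightarrow> bool" where
  "doubling_space _ \<longleftrightarrow> (\<exists>N::nat. \<forall>(x::'a) r. r > 0 \<longrightarrow>
      (\<exists>C. finite C \<and> card C \<le> N \<and> cball x r \<subseteq> (\<Union>c\<in>C. cball c (r/2))))"

definition is_measure :: "('a::metric_space set \<Rightarrow> ennreal) \<Rightarrow> bool" where
  "is_measure \<mu> \<longleftrightarrow>
     \<mu> {} = 0 \<and>
     (\<forall>A B. A \<subseteq> B \<longrightarrow> \<mu> A \<le> \<mu> B) \<and>
     (\<forall>A::nat \<Rightarrow> 'a set. \<mu> (\<Union>i. A i) \<le> (\<Sum>i. \<mu> (A i))) \<and>
     (\<forall>B\<in>sets borel. \<forall>A. \<mu> A = \<mu> (A \<inter> B) + \<mu> (A - B)) \<and>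
     (\<forall>A. \<exists>B\<in>sets borel. A \<subseteq> B \<and> \<mu> B = \<mu> A) \<and>
     (\<forall>A. bounded A \<longrightarrow> \<mu> A < \<infinity>) \<and>
     (\<exists>A. \<mu> A \<noteq> 0)"

definition spt :: "('a::metric_space set \<Rightarrow> ennreal) \<Rightarrow> 'a set" where
  "spt \<mu> = {x. \<forall>r>0. \<mu> (ball x r) > 0}"

definition delta_packing :: "real \<Rightarrow> 'a::metric_space set \<Rightarrow> 'a set set \<Rightarrow> bool" where
  "delta_packing \<delta> A \<B> \<longleftrightarrow> countable \<B> \<and>
     (\<forall>B1\<in>\<B>. \<forall>B2\<in>\<B>. B1 \<noteq> B2 \<longrightarrow> B1 \<inter> B2 = {}) \<and>
     (\<forall>B\<in>\<B>. \<exists>c\<in>A. B = cball c \<delta>)"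

text \<open>mu(B)^q with the convention 0^q = 0 (also for q = 0); note 0 powr q = 0 in Isabelle.\<close>
definition mpow :: "('a set \<Rightarrow> ennreal) \<Rightarrow> real \<Rightarrow> 'a set \<Rightarrow> ennreal" where
  "mpow \<mu> q B = ennreal (enn2real (\<mu> B) powr q)"

definition S_q :: "('a::metric_space set \<Rightarrow> ennreal) \<Rightarrow> real \<Rightarrow> 'a set \<Rightarrow> real \<Rightarrow> ennreal" where
  "S_q \<mu> q A \<delta> = (SUP \<B>\<in>{\<B>. delta_packing \<delta> (A \<inter> spt \<mu>) \<B>}. \<Sum>\<^sub>\<infinity>B\<in>\<B>. mpow \<mu> q B)"

text \<open>Local L^q-spectrum (ratio of logarithms is base independent, so ln is used).\<close>
definition tau_q :: "('a::metric_space set \<Rightarrow> ennreal) \<Rightarrow> real \<Rightarrow> 'a \<Rightarrow> ereal" where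
  "tau_q \<mu> q x = Lim (at_right 0) (\<lambda>r.
      Liminf (at_right 0) (\<lambda>\<delta>. ereal (ln (enn2real (S_q \<mu> q (cball x r) \<delta>)) / ln \<delta>)))"

end

theory Submission
  imports Defs
begin
definition cntN :: "nat \<Rightarrow> real \<Rightarrow> nat" where "cntN N t = N ^ nat \<lceil>log 2 (2*t)\<rceil>"

lemma doubling_iter:
  fixes x :: "'a::metric_space"
  assumes D: "\<forall>(x::'a) r. r>0 \<longrightarrow> (\<exists>C. finite C \<and> card C \<le> N \<and> cball x r \<subseteq> (\<Union>c\<in>C. cball c (r/2)))"
    and r: "r>0"
  shows "\<exists>C. finite C \<and> card C \<le> N^k \<and> cball x r \<subseteq> (\<Union>c\<in>C. cball c (r/2^k))"
proof (induction k)
  case 0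
  show ?case by (rule exI[of _ "{x}"]) auto
next
  case (Suc k)
  then obtain C where C: "finite C" "card C \<le> N^k" "cball x r \<subseteq> (\<Union>c\<in>C. cball c (r/2^k))" by blast
  have rk: "r/2^k > 0" using r by simp
  have "\<forall>c::'a. \<exists>Dc. finite Dc \<and> card Dc \<le> N \<and> cball c (r/2^k) \<subseteq> (\<Union>d\<in>Dc. cball d (r/2^k/2))"
    using D[rule_format, OF rk] by blast
  from choice[OF this] obtain Dc where Dc0: "\<forall>c::'a. finite (Dc c) \<and> card (Dc c) \<le> N \<and>
     cball c (r/2^k) \<subseteq> (\<Union>d\<in>Dc c. cball d (r/2^k/2))" by blast
  have Dc: "\<And>c. finite (Dc c)" "\<And>c. card (Dc c) \<le> N"
     "\<And>c. cball c (r/2^k) \<subseteq> (\<Union>d\<in>Dc c. cball d (r/2^k/2))" using Dc0 by auto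
  define C' where "C' = (\<Union>c\<in>C. Dc c)"
  have "finite C'" using C(1) Dc(1) by (simp add: C'_def)
  moreover have "card C' \<le> N^(Suc k)"
  proof -
    have "card C' \<le> (\<Sum>c\<in>C. card (Dc c))" unfolding C'_def by (rule card_UN_le[OF C(1)])
    also have "\<dots> \<le> (\<Sum>c\<in>C. N)" by (rule sum_mono) (use Dc(2) in auto)
    also have "\<dots> = card C * N" by simp
    also have "\<dots> \<le> N^k * N" using C(2) by simp
    finally show ?thesis by (simp add: mult.commute)
  qed
  moreover have "cball x r \<subseteq> (\<Union>c\<in>C'. cball c (r/2^(Suc k)))"
  proof
    fix y assume "y \<in> cball x r"
    then obtain c where "c \<in> C" "y \<in> cball c (r/2^k)" using C(3) by blast
    then obtain d where "d \<in> Dc c" "y \<in> cball d (r/2^k/2)" using Dc(3) by blast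
    then have "y \<in> cball d (r/2^(Suc k))" by (simp add: mult.commute)
    then show "y \<in> (\<Union>c\<in>C'. cball c (r/2^(Suc k)))" using \<open>c\<in>C\<close> \<open>d \<in> Dc c\<close> by (auto simp: C'_def)
  qed
  ultimately show ?case by blast
qed

lemma sep_count:
  fixes z :: "'a::metric_space"
  assumes cov: "\<And>(x::'a) r k. r>0 \<Longrightarrow> \<exists>C. finite C \<and> card C \<le> N^k \<and> cball x r \<subseteq> (\<Union>c\<in>C. cball c (r/2^k))"
    and rho: "\<rho>>0" and R: "R>0" and P: "P \<subseteq> cball z R"
    and sep: "\<forall>p\<in>P. \<forall>p'\<in>P. p\<noteq>p' \<longrightarrow> dist p p' > \<rho>"
  shows "finite P \<and> card P \<le> cntN N (R/\<rho>)"
proof -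
  define k where "k = nat \<lceil>log 2 (2*(R/\<rho>))\<rceil>"
  have pos: "2*(R/\<rho>) > 0" using rho R by simp
  have "log 2 (2*(R/\<rho>)) \<le> real k" unfolding k_def by (rule real_nat_ceiling_ge)
  hence "2 powr (log 2 (2*(R/\<rho>))) \<le> 2 powr (real k)" by (rule powr_mono) simp
  hence "2*(R/\<rho>) \<le> 2^k" using pos by (simp add: powr_realpow)
  hence sk: "2*(R/2^k) \<le> \<rho>" using rho by (simp add: field_simps)
  obtain C where C: "finite C" "card C \<le> N^k" "cball z R \<subseteq> (\<Union>c\<in>C. cball c (R/2^k))"
    using cov[OF R] by blast
  define f where "f p = (SOME c. c\<in>C \<and> p \<in> cball c (R/2^k))" for p
  have f: "f p \<in> C \<and> p \<in> cball (f p) (R/2^k)" if "p \<in> P" for p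
    unfolding f_def by (rule someI_ex) (use that P C(3) in blast)
  have inj: "inj_on f P"
  proof (rule inj_onI)
    fix p p' assume pp: "p\<in>P" "p'\<in>P" "f p = f p'"
    have "dist p p' \<le> dist p (f p) + dist (f p') p'" using pp(3) dist_triangle by metis
    also have "\<dots> \<le> 2*(R/2^k)" using f[OF pp(1)] f[OF pp(2)] by (simp add: dist_commute)
    finally have "dist p p' \<le> \<rho>" using sk by linarith
    then show "p = p'" using sep pp(1,2) by fastforce
  qed
  have img: "f ` P \<subseteq> C" using f by blast
  have "finite P" using finite_imageD[OF finite_subset[OF img C(1)] inj] .
  moreover have "card P \<le> N^k" using card_inj_on_le[OF inj img C(1)] C(2) by simp
  ultimately show ?thesis unfolding cntN_def k_def by blast
qed

locale setting =
  fixes \<mu> :: "'a::metric_space set \<Rightarrow> ennreal"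
    and \<delta> \<gamma> :: "nat \<Rightarrow> real"
    and Q :: "nat \<Rightarrow> 'a set set"
    and E :: "'a set"
    and q :: real
    and N :: nat
  assumes cov: "\<And>(x::'a) r k. r>0 \<Longrightarrow> \<exists>C. finite C \<and> card C \<le> N^k \<and> cball x r \<subseteq> (\<Union>c\<in>C. cball c (r/2^k))"
    and N1: "N \<ge> 1"
    and \<delta>_pos: "\<And>n. \<delta> n > 0" and \<delta>_dec: "decseq \<delta>"
    and \<gamma>_pos: "\<And>n. \<gamma> n > 0" and \<gamma>_dec: "decseq \<gamma>"
    and \<delta>_le_\<gamma>: "\<And>n. \<delta> n \<le> \<gamma> n"
    and \<gamma>_lim: "\<gamma> \<longlonglongrightarrow> 0"
    and \<delta>_ratio: "(\<lambda>n. ln (\<delta> n) / ln (\<delta> (Suc n))) \<longlonglongrightarrow> 1"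
    and \<gamma>\<delta>_ratio: "(\<lambda>n. ln (\<gamma> n) / ln (\<delta> n)) \<longlonglongrightarrow> 1"
    and Q_disj: "\<And>n. \<forall>A\<in>Q n. \<forall>B\<in>Q n. A \<noteq> B \<longrightarrow> A \<inter> B = {}"
    and Q_inner: "\<And>n A. A \<in> Q n \<Longrightarrow> \<exists>c. cball c (\<delta> n) \<subseteq> A"
    and Q_outer: "\<And>n A. A \<in> Q n \<Longrightarrow> \<exists>c. A \<subseteq> cball c (\<gamma> n)"
    and E_def: "E = (\<Inter>n. \<Union>(Q n))"
    and \<mu>_meas: "is_measure \<mu>"
    and \<mu>_E: "\<mu> (UNIV - E) = 0"
    and q_nonneg: "q \<ge> 0"
begin

abbreviation cnt where "cnt t \<equiv> cntN N t"

lemma mu_props: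
  "\<mu> {} = 0 \<and> (\<forall>A B. A \<subseteq> B \<longrightarrow> \<mu> A \<le> \<mu> B) \<and>
     (\<forall>A::nat \<Rightarrow> 'a set. \<mu> (\<Union>i. A i) \<le> (\<Sum>i. \<mu> (A i)))"
  "\<forall>A. bounded A \<longrightarrow> \<mu> A < \<infinity>"
proof -
  have h: "\<mu> {} = 0 \<and>
     (\<forall>A B. A \<subseteq> B \<longrightarrow> \<mu> A \<le> \<mu> B) \<and>
     (\<forall>A::nat \<Rightarrow> 'a set. \<mu> (\<Union>i. A i) \<le> (\<Sum>i. \<mu> (A i))) \<and>
     (\<forall>B\<in>sets borel. \<forall>A. \<mu> A = \<mu> (A \<inter> B) + \<mu> (A - B)) \<and>
     (\<forall>A. \<exists>B\<in>sets borel. A \<subseteq> B \<and> \<mu> B = \<mu> A) \<and>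
     (\<forall>A. bounded A \<longrightarrow> \<mu> A < \<infinity>) \<and>
     (\<exists>A. \<mu> A \<noteq> 0)" using \<mu>_meas unfolding is_measure_def .
  show "\<mu> {} = 0 \<and> (\<forall>A B. A \<subseteq> B \<longrightarrow> \<mu> A \<le> \<mu> B) \<and>
     (\<forall>A::nat \<Rightarrow> 'a set. \<mu> (\<Union>i. A i) \<le> (\<Sum>i. \<mu> (A i)))"
    using conjunct1[OF h] conjunct1[OF conjunct2[OF h]] conjunct1[OF conjunct2[OF conjunct2[OF h]]] by blast
  show "\<forall>A. bounded A \<longrightarrow> \<mu> A < \<infinity>" using conjunct1[OF conjunct2[OF conjunct2[OF conjunct2[OF conjunct2[OF conjunct2[OF h]]]]]] .
qed

lemma mu_empty: "\<mu> {} = 0" using mu_props(1) by (rule conjunct1)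
lemma mu_mono: "A \<subseteq> B \<Longrightarrow> \<mu> A \<le> \<mu> B" using mu_props(1) by blast
lemma mu_ctbl: "\<mu> (\<Union>i. A i) \<le> (\<Sum>i. \<mu> (A i))" for A :: "nat \<Rightarrow> 'a set"
  using mu_props(1) by blast
lemma mu_bdd: "bounded A \<Longrightarrow> \<mu> A < \<infinity>" using mu_props(2) by blast
lemma mu_cball_fin: "A \<subseteq> cball c r \<Longrightarrow> \<mu> A < top"
proof -
  assume "A \<subseteq> cball c r"
  then have "bounded A" by (rule bounded_subset[OF bounded_cball])
  then show ?thesis using mu_bdd by simp
qed

lemma mu_un: "\<mu> (A \<union> B) \<le> \<mu> A + \<mu> B"
proof -
  define S where "S i = (if i = (0::nat) then A else if i = 1 then B else {})" for i
  have U: "(\<Union>i. S i) = A \<union> B"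
  proof
    show "(\<Union>i. S i) \<subseteq> A \<union> B" unfolding S_def by auto
    show "A \<union> B \<subseteq> (\<Union>i. S i)"
    proof
      fix x assume "x \<in> A \<union> B"
      then have "x \<in> S 0 \<or> x \<in> S 1" unfolding S_def by auto
      then show "x \<in> (\<Union>i. S i)" by blast
    qed
  qed
  have SF: "(\<Sum>i. \<mu> (S i)) = (\<Sum>i\<in>{0,1}. \<mu> (S i))"
    by (rule suminf_finite) (auto simp: S_def mu_empty)
  have "\<mu> (A \<union> B) = \<mu> (\<Union>i. S i)" by (simp only: U)
  also have "\<dots> \<le> (\<Sum>i. \<mu> (S i))" by (rule mu_ctbl)
  also have "\<dots> = (\<Sum>i\<in>{0,1}. \<mu> (S i))" by (rule SF)
  also have "\<dots> = \<mu> A + \<mu> B" by (simp add: S_def)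
  finally show ?thesis .
qed

lemma mu_UN: "finite I \<Longrightarrow> \<mu> (\<Union>i\<in>I. f i) \<le> (\<Sum>i\<in>I. \<mu> (f i))"
proof (induction I rule: finite_induct)
  case empty then show ?case by (simp add: mu_empty)
next
  case (insert i I)
  have "\<mu> (\<Union>j\<in>insert i I. f j) = \<mu> (f i \<union> (\<Union>j\<in>I. f j))" by simp
  also have "\<dots> \<le> \<mu> (f i) + \<mu> (\<Union>j\<in>I. f j)" by (rule mu_un)
  also have "\<dots> \<le> \<mu> (f i) + (\<Sum>j\<in>I. \<mu> (f j))" using insert.IH by (rule add_left_mono)
  finally show ?case using insert by simp
qed

lemma cnt_mono: "0 < t \<Longrightarrow> t \<le> t' \<Longrightarrow> cnt t \<le> cnt t'"
proof -
  assume a: "0 < t" "t \<le> t'"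
  have "log 2 (2*t) \<le> log 2 (2*t')" using a by simp
  then show ?thesis unfolding cntN_def by (rule power_increasing[OF nat_mono[OF ceiling_mono]]) (rule N1)
qed

lemma sepc:
  fixes z :: 'a
  assumes "\<rho>>0" "R>0" "P \<subseteq> cball z R" "\<forall>p\<in>P. \<forall>p'\<in>P. p\<noteq>p' \<longrightarrow> dist p p' > \<rho>"
  shows "finite P \<and> card P \<le> cnt (R/\<rho>)"
proof -
  note sc = sep_count[where N=N]
  show ?thesis apply (rule sc) apply (rule cov) apply assumption apply (rule assms)+ done
qed

lemma max_sep:
  fixes T :: "'a set"
  assumes rho: "\<rho>>0" and R: "R>0" and T: "T \<subseteq> cball y R"
  shows "\<exists>Z\<subseteq>T. finite Z \<and> (\<forall>z\<in>Z. \<forall>z'\<in>Z. z\<noteq>z' \<longrightarrow> dist z z' > \<rho>) \<and> (\<forall>t\<in>T. \<exists>z\<in>Z. dist t z \<le> \<rho>)"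
proof -
  define P where "P Z \<longleftrightarrow> Z \<subseteq> T \<and> finite Z \<and> (\<forall>z\<in>Z. \<forall>z'\<in>Z. z\<noteq>z' \<longrightarrow> dist z z' > \<rho>)" for Z
  have P0: "P {}" by (simp add: P_def)
  have bd: "\<forall>Z. P Z \<longrightarrow> card Z < cnt (R/\<rho>) + 1"
  proof (intro allI impI)
    fix Z assume "P Z"
    then have "Z \<subseteq> cball y R" "\<forall>p\<in>Z. \<forall>p'\<in>Z. p\<noteq>p' \<longrightarrow> dist p p' > \<rho>" using T unfolding P_def by auto
    then have "card Z \<le> cnt (R/\<rho>)" using sepc[OF rho R, of Z y] by blast
    then show "card Z < cnt (R/\<rho>) + 1" by simp
  qed
  obtain Z where Z: "P Z" "\<forall>Z'. P Z' \<longrightarrow> card Z' \<le> card Z"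
    using ex_has_greatest_nat[of P "{}" card, OF P0 bd] by blast
  have "\<forall>t\<in>T. \<exists>z\<in>Z. dist t z \<le> \<rho>"
  proof (rule ccontr)
    assume "\<not> ?thesis"
    then obtain t where t: "t \<in> T" "\<forall>z\<in>Z. dist t z > \<rho>" by (auto simp: not_le)
    have tZ: "t \<notin> Z"
    proof
      assume "t \<in> Z"
      then have "dist t t > \<rho>" using t(2) by blast
      then show False using rho by simp
    qed
    have sepI: "\<forall>z\<in>insert t Z. \<forall>z'\<in>insert t Z. z\<noteq>z' \<longrightarrow> dist z z' > \<rho>"
    proof (intro ballI impI)
      fix z z' assume zz: "z \<in> insert t Z" "z' \<in> insert t Z" "z \<noteq> z'"
      show "dist z z' > \<rho>"
      proof (cases "z = t")
        case True
        then have "z' \<in> Z" using zz by blast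
        then show ?thesis using t(2) True by blast
      next
        case False
        then have z: "z \<in> Z" using zz by blast
        show ?thesis
        proof (cases "z' = t")
          case True
          have "dist t z > \<rho>" using t(2) z by blast
          then show ?thesis using True by (simp add: dist_commute)
        next
          case False
          then have "z' \<in> Z" using zz by blast
          then show ?thesis using Z(1) z zz(3) unfolding P_def by blast
        qed
      qed
    qed
    have subI: "insert t Z \<subseteq> T" using Z(1) t(1) unfolding P_def by blast
    have finI: "finite (insert t Z)" using Z(1) unfolding P_def by simp
    have "P (insert t Z)" unfolding P_def using subI finI sepI by (intro conjI)
    then have "card (insert t Z) \<le> card Z" using Z(2) by blast
    moreover have "card (insert t Z) = Suc (card Z)" using tZ Z(1) unfolding P_def by simp
    ultimately show False by simp
  qed
  then show ?thesis using Z(1) unfolding P_def by blast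
qed

lemma null_outside_spt:
  fixes A :: "'a set"
  assumes A: "A \<subseteq> cball y R"
  shows "\<mu> (A - spt \<mu>) = 0"
proof -
  define T where "T m = {t\<in>A. \<mu> (ball t (1/(Suc m))) = 0}" for m
  have sub: "A - spt \<mu> \<subseteq> (\<Union>m. T m)"
  proof
    fix t assume t: "t \<in> A - spt \<mu>"
    then obtain r where r: "r > 0" "\<not> \<mu> (ball t r) > 0" unfolding spt_def by auto
    then have r0: "\<mu> (ball t r) = 0" by (simp add: not_less)
    obtain m where m0: "inverse (real (Suc m)) < r" using reals_Archimedean[OF r(1)] by blast
    then have m: "1 / Suc m < r" by (simp add: divide_inverse)
    have "\<mu> (ball t (1/Suc m)) \<le> \<mu> (ball t r)" by (rule mu_mono) (use m in auto)
    then have "\<mu> (ball t (1/Suc m)) = 0" using r0 by simp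
    then show "t \<in> (\<Union>m. T m)" using t unfolding T_def by blast
  qed
  have Tm: "\<mu> (T m) = 0" for m
  proof -
    define R' where "R' = max R 1"
    have R': "R' > 0" "T m \<subseteq> cball y R'" using A unfolding R'_def T_def by auto
    define \<rho> where "\<rho> = 1 / (2 * Suc m)"
    have rho: "\<rho> > 0" "\<rho> < 1 / Suc m" unfolding \<rho>_def by (auto simp: field_simps)
    obtain Z where Z: "Z \<subseteq> T m" "finite Z" "\<forall>t\<in>T m. \<exists>z\<in>Z. dist t z \<le> \<rho>"
      using max_sep[OF rho(1) R'] by blast
    have "T m \<subseteq> (\<Union>z\<in>Z. ball z (1/Suc m))"
    proof
      fix t assume "t \<in> T m"
      then obtain z where z: "z\<in>Z" "dist t z \<le> \<rho>" using Z(3) by blast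
      then have "t \<in> ball z (1/Suc m)" using rho(2) by (simp add: dist_commute)
      then show "t \<in> (\<Union>z\<in>Z. ball z (1/Suc m))" using z(1) by blast
    qed
    then have "\<mu> (T m) \<le> \<mu> (\<Union>z\<in>Z. ball z (1/Suc m))" by (rule mu_mono)
    also have "\<dots> \<le> (\<Sum>z\<in>Z. \<mu> (ball z (1/Suc m)))" by (rule mu_UN[OF Z(2)])
    also have "\<dots> = 0" using Z(1) unfolding T_def by (intro sum.neutral) blast
    finally show ?thesis by simp
  qed
  have "\<mu> (A - spt \<mu>) \<le> \<mu> (\<Union>m. T m)" by (rule mu_mono[OF sub])
  also have "\<dots> \<le> (\<Sum>m. \<mu> (T m))" by (rule mu_ctbl)
  also have "\<dots> = 0" by (simp add: Tm)
  finally show ?thesis by simp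
qed

end

lemma greedy_color:
  assumes "finite Z" "\<And>z z'. adj z z' \<Longrightarrow> adj z' z"
    and "\<And>z. z \<in> Z \<Longrightarrow> card {z'\<in>Z. z' \<noteq> z \<and> adj z z'} < K"
  shows "\<exists>col. (\<forall>z\<in>Z. col z < K) \<and> (\<forall>z\<in>Z. \<forall>z'\<in>Z. z \<noteq> z' \<and> adj z z' \<longrightarrow> col z \<noteq> col z')"
  using assms
proof (induction Z rule: finite_induct)
  case empty
  show ?case by (rule exI[of _ "\<lambda>_. 0"]) simp
next
  case (insert a F)
  have degF: "card {z'\<in>F. z' \<noteq> z \<and> adj z z'} < K" if "z \<in> F" for z
  proof -
    have "card {z'\<in>F. z' \<noteq> z \<and> adj z z'} \<le> card {z'\<in>insert a F. z' \<noteq> z \<and> adj z z'}"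
      by (rule card_mono) (use insert.hyps(1) in auto)
    also have "\<dots> < K" by (rule insert.prems(2)) (use that in simp)
    finally show ?thesis .
  qed
  from insert.IH[OF insert.prems(1) degF] obtain col where col0: "(\<forall>z\<in>F. col z < K) \<and> (\<forall>z\<in>F. \<forall>z'\<in>F. z \<noteq> z' \<and> adj z z' \<longrightarrow> col z \<noteq> col z')" ..
  note col = conjunct1[OF col0] conjunct2[OF col0]
  define U where "U = col ` {z'\<in>F. adj a z'}"
  have "{z'\<in>F. adj a z'} \<subseteq> {z'\<in>insert a F. z' \<noteq> a \<and> adj a z'}" using insert.hyps(2) by blast
  then have "card {z'\<in>F. adj a z'} \<le> card {z'\<in>insert a F. z' \<noteq> a \<and> adj a z'}"
    by (rule card_mono[rotated]) (use insert.hyps(1) in simp)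
  also have "\<dots> < K" by (rule insert.prems(2)) simp
  finally have cF: "card {z'\<in>F. adj a z'} < K" .
  have finU: "finite U" unfolding U_def using insert.hyps(1) by simp
  have "card U \<le> card {z'\<in>F. adj a z'}" unfolding U_def by (rule card_image_le) (use insert.hyps(1) in simp)
  then have cU: "card U < K" using cF by linarith
  have "\<not> {..<K} \<subseteq> U"
  proof
    assume "{..<K} \<subseteq> U"
    then have "card {..<K} \<le> card U" by (rule card_mono[OF finU])
    then show False using cU by simp
  qed
  then obtain c where c: "c < K" "c \<notin> U" by blast
  define col' where "col' = col(a := c)"
  have "\<forall>z\<in>insert a F. col' z < K" using col(1) c(1) by (simp add: col'_def)
  moreover have "\<forall>z\<in>insert a F. \<forall>z'\<in>insert a F. z \<noteq> z' \<and> adj z z' \<longrightarrow> col' z \<noteq> col' z'"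
  proof (intro ballI impI)
    fix z z' assume zz: "z \<in> insert a F" "z' \<in> insert a F" "z \<noteq> z' \<and> adj z z'"
    show "col' z \<noteq> col' z'"
    proof (cases "z = a")
      case True
      then have "z' \<in> F" "adj a z'" using zz by auto
      then have "col z' \<in> U" unfolding U_def by blast
      have "z' \<noteq> a" using \<open>z' \<in> F\<close> insert.hyps(2) by blast
      then have "col' z' = col z'" "col' z = c" using True by (simp_all add: col'_def)
      then show ?thesis using \<open>col z' \<in> U\<close> c(2) by metis
    next
      case False
      then have zF: "z \<in> F" using zz by blast
      show ?thesis
      proof (cases "z' = a")
        case True
        then have "adj a z" using zz insert.prems(1) by blast
        then have "col z \<in> U" unfolding U_def using zF by blast
        have "col' z = col z" "col' z' = c" using True \<open>z \<noteq> a\<close> by (simp_all add: col'_def)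
        then show ?thesis using \<open>col z \<in> U\<close> c(2) by metis
      next
        case False
        then have "z' \<in> F" using zz by blast
        have "col' z = col z" "col' z' = col z'" using False \<open>z \<noteq> a\<close> by (simp_all add: col'_def)
        then show ?thesis using col(2) zF \<open>z' \<in> F\<close> zz(3) by metis
      qed
    qed
  qed
  ultimately show ?case by blast
qed

lemma pow_sum_le:
  fixes b :: "'j \<Rightarrow> real"
  assumes S: "finite S" and K: "real (card S) \<le> K" "K \<ge> 1" and b: "\<And>j. j \<in> S \<Longrightarrow> b j \<ge> 0" and q: "q \<ge> 0"
  shows "(\<Sum>j\<in>S. b j) powr q \<le> K powr q * (\<Sum>j\<in>S. b j powr q)"
proof (cases "(\<Sum>j\<in>S. b j) = 0")
  case True
  have "0 \<le> K powr q * (\<Sum>j\<in>S. b j powr q)" by (intro mult_nonneg_nonneg sum_nonneg) auto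
  then show ?thesis using True by simp
next
  case False
  then have Sne: "S \<noteq> {}" by auto
  define m where "m = Max (b ` S)"
  have mS: "m \<in> b ` S" unfolding m_def using S Sne by simp
  then obtain j0 where j0: "j0 \<in> S" "m = b j0" by blast
  have bm: "b j \<le> m" if "j \<in> S" for j unfolding m_def using S that by simp
  have m0: "m \<ge> 0" using b j0 by simp
  have "(\<Sum>j\<in>S. b j) \<le> (\<Sum>j\<in>S. m)" by (rule sum_mono) (rule bm)
  also have "\<dots> = real (card S) * m" by simp
  also have "\<dots> \<le> K * m" using K(1) m0 by (rule mult_right_mono)
  finally have le: "(\<Sum>j\<in>S. b j) \<le> K * m" .
  have "(\<Sum>j\<in>S. b j) powr q \<le> (K * m) powr q"
    by (rule powr_mono2[OF q sum_nonneg le]) (use b in auto)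
  also have "\<dots> = K powr q * m powr q" using K(2) m0 by (simp add: powr_mult)
  also have "\<dots> \<le> K powr q * (\<Sum>j\<in>S. b j powr q)"
  proof (rule mult_left_mono)
    show "m powr q \<le> (\<Sum>j\<in>S. b j powr q)" unfolding j0(2)
      by (rule member_le_sum[OF j0(1) _ S]) simp
  qed simp
  finally show ?thesis .
qed

lemma double_count:
  fixes a :: "'i \<Rightarrow> real" and b :: "'j \<Rightarrow> real"
  assumes I: "finite I" and J: "finite J" and K: "K \<ge> 1" and q: "q \<ge> 0"
    and a0: "\<And>i. i \<in> I \<Longrightarrow> a i \<ge> 0" and b0: "\<And>j. j \<in> J \<Longrightarrow> b j \<ge> 0"
    and ab: "\<And>i. i \<in> I \<Longrightarrow> a i \<le> (\<Sum>j\<in>{j\<in>J. R i j}. b j)"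
    and cI: "\<And>i. i \<in> I \<Longrightarrow> real (card {j\<in>J. R i j}) \<le> K"
    and cJ: "\<And>j. j \<in> J \<Longrightarrow> real (card {i\<in>I. R i j}) \<le> K"
  shows "(\<Sum>i\<in>I. a i powr q) \<le> K powr (q+1) * (\<Sum>j\<in>J. b j powr q)"
proof -
  have "(\<Sum>i\<in>I. a i powr q) \<le> (\<Sum>i\<in>I. K powr q * (\<Sum>j\<in>{j\<in>J. R i j}. b j powr q))"
  proof (rule sum_mono)
    fix i assume i: "i \<in> I"
    have "a i powr q \<le> (\<Sum>j\<in>{j\<in>J. R i j}. b j) powr q"
      by (rule powr_mono2[OF q a0[OF i] ab[OF i]])
    also have "\<dots> \<le> K powr q * (\<Sum>j\<in>{j\<in>J. R i j}. b j powr q)"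
      by (rule pow_sum_le) (use J cI[OF i] K b0 q in auto)
    finally show "a i powr q \<le> K powr q * (\<Sum>j\<in>{j\<in>J. R i j}. b j powr q)" .
  qed
  also have "\<dots> = K powr q * (\<Sum>i\<in>I. \<Sum>j\<in>{j\<in>J. R i j}. b j powr q)" by (simp add: sum_distrib_left)
  also have "(\<Sum>i\<in>I. \<Sum>j\<in>{j\<in>J. R i j}. b j powr q) = (\<Sum>j\<in>J. \<Sum>i\<in>{i\<in>I. R i j}. b j powr q)"
    by (rule sum.swap_restrict[OF I J])
  also have "\<dots> = (\<Sum>j\<in>J. real (card {i\<in>I. R i j}) * b j powr q)" by simp
  also have "\<dots> \<le> (\<Sum>j\<in>J. K * b j powr q)"
    by (rule sum_mono) (rule mult_right_mono[OF cJ], auto)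
  also have "\<dots> = K * (\<Sum>j\<in>J. b j powr q)" by (simp add: sum_distrib_left)
  finally have "(\<Sum>i\<in>I. a i powr q) \<le> K powr q * (K * (\<Sum>j\<in>J. b j powr q))"
    using K by (simp add: mult_left_mono)
  also have "\<dots> = K powr (q+1) * (\<Sum>j\<in>J. b j powr q)" using K by (simp add: powr_add)
  finally show ?thesis .
qed

context setting begin

definition ic :: "nat \<Rightarrow> 'a set \<Rightarrow> 'a" where "ic n A = (SOME c. cball c (\<delta> n) \<subseteq> A)"
definition oc :: "nat \<Rightarrow> 'a set \<Rightarrow> 'a" where "oc n A = (SOME c. A \<subseteq> cball c (\<gamma> n))"

lemma ic: "A \<in> Q n \<Longrightarrow> cball (ic n A) (\<delta> n) \<subseteq> A"
  unfolding ic_def by (rule someI_ex) (rule Q_inner)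
lemma oc: "A \<in> Q n \<Longrightarrow> A \<subseteq> cball (oc n A) (\<gamma> n)"
  unfolding oc_def by (rule someI_ex) (rule Q_outer)
lemma ic_in: "A \<in> Q n \<Longrightarrow> ic n A \<in> A"
proof -
  assume A: "A \<in> Q n"
  have "ic n A \<in> cball (ic n A) (\<delta> n)" using \<delta>_pos[of n] by simp
  then show ?thesis using ic[OF A] by blast
qed

lemma ic_sep:
  assumes A: "A \<in> Q n" and A': "A' \<in> Q n" and ne: "A \<noteq> A'"
  shows "dist (ic n A) (ic n A') > \<delta> n"
proof (rule ccontr)
  assume "\<not> ?thesis"
  then have "ic n A' \<in> cball (ic n A) (\<delta> n)" by (simp add: not_less)
  then have "ic n A' \<in> A" using ic[OF A] by blast
  moreover have "ic n A' \<in> A'" by (rule ic_in[OF A'])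
  moreover have "A \<inter> A' = {}" using Q_disj[of n] A A' ne by blast
  ultimately show False by blast
qed

lemma ic_inj: "inj_on (ic n) (Q n)"
proof (rule inj_onI)
  fix A A' assume h: "A \<in> Q n" "A' \<in> Q n" "ic n A = ic n A'"
  show "A = A'"
  proof (rule ccontr)
    assume "A \<noteq> A'"
    then have "dist (ic n A) (ic n A') > \<delta> n" by (rule ic_sep[OF h(1,2)])
    then show False using h(3) \<delta>_pos[of n] by simp
  qed
qed

lemma cells_meet:
  fixes Y :: "'a set"
  assumes Y: "Y \<subseteq> cball y R" and R: "R \<ge> 0"
  shows "finite {A\<in>Q m. A\<inter>Y\<noteq>{}} \<and> card {A\<in>Q m. A\<inter>Y\<noteq>{}} \<le> cnt ((R + 2*\<gamma> m)/\<delta> m)"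
proof -
  define CC where "CC = {A\<in>Q m. A\<inter>Y\<noteq>{}}"
  have sub: "ic m ` CC \<subseteq> cball y (R + 2*\<gamma> m)"
  proof
    fix p assume "p \<in> ic m ` CC"
    then obtain A where A: "A \<in> Q m" "A \<inter> Y \<noteq> {}" "p = ic m A" unfolding CC_def by blast
    then obtain w where w: "w \<in> A" "w \<in> Y" by blast
    have d1: "dist y w \<le> R" using Y w(2) by auto
    have "w \<in> cball (oc m A) (\<gamma> m)" "p \<in> cball (oc m A) (\<gamma> m)"
      using oc[OF A(1)] w(1) ic_in[OF A(1)] A(3) by blast+
    then have "dist w p \<le> 2 * \<gamma> m"
      using dist_triangle[of w p "oc m A"] by (simp add: dist_commute)
    then have "dist y p \<le> R + 2*\<gamma> m" using d1 dist_triangle[of y p w] by linarith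
    then show "p \<in> cball y (R + 2*\<gamma> m)" by simp
  qed
  have sep: "\<forall>p\<in>ic m ` CC. \<forall>p'\<in>ic m ` CC. p\<noteq>p' \<longrightarrow> dist p p' > \<delta> m"
  proof (intro ballI impI)
    fix p p' assume "p \<in> ic m ` CC" "p' \<in> ic m ` CC" "p \<noteq> p'"
    then obtain A A' where "A \<in> Q m" "A' \<in> Q m" "p = ic m A" "p' = ic m A'" unfolding CC_def by blast
    then show "dist p p' > \<delta> m" using ic_sep \<open>p \<noteq> p'\<close> by blast
  qed
  have pos: "R + 2*\<gamma> m > 0" using R \<gamma>_pos[of m] by linarith
  have fc: "finite (ic m ` CC) \<and> card (ic m ` CC) \<le> cnt ((R + 2*\<gamma> m)/\<delta> m)"
    by (rule sepc[OF \<delta>_pos pos sub sep])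
  have inj: "inj_on (ic m) CC" by (rule inj_on_subset[OF ic_inj]) (auto simp: CC_def)
  have "finite CC" using finite_imageD[OF conjunct1[OF fc] inj] .
  moreover have "card CC \<le> cnt ((R + 2*\<gamma> m)/\<delta> m)" using fc card_image[OF inj] by simp
  ultimately show ?thesis unfolding CC_def by blast
qed

lemma cells_cover:
  fixes Y :: "'a set"
  assumes Y: "Y \<subseteq> cball y R"
  shows "\<mu> Y \<le> (\<Sum>A\<in>{A\<in>Q m. A\<inter>Y\<noteq>{}}. \<mu> A)"
proof -
  have Y': "Y \<subseteq> cball y (max R 0)" using Y by auto
  have fin: "finite {A\<in>Q m. A\<inter>Y\<noteq>{}}" using cells_meet[OF Y'] by simp
  have "Y \<subseteq> (UNIV - E) \<union> (\<Union>A\<in>{A\<in>Q m. A\<inter>Y\<noteq>{}}. A)"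
  proof
    fix w assume w: "w \<in> Y"
    show "w \<in> (UNIV - E) \<union> (\<Union>A\<in>{A\<in>Q m. A\<inter>Y\<noteq>{}}. A)"
    proof (cases "w \<in> E")
      case True
      then have "w \<in> \<Union>(Q m)" unfolding E_def by blast
      then obtain A where "A \<in> Q m" "w \<in> A" by blast
      then show ?thesis using w by blast
    qed blast
  qed
  then have "\<mu> Y \<le> \<mu> ((UNIV - E) \<union> (\<Union>A\<in>{A\<in>Q m. A\<inter>Y\<noteq>{}}. A))" by (rule mu_mono)
  also have "\<dots> \<le> \<mu> (UNIV - E) + \<mu> (\<Union>A\<in>{A\<in>Q m. A\<inter>Y\<noteq>{}}. A)" by (rule mu_un)
  also have "\<dots> = \<mu> (\<Union>A\<in>{A\<in>Q m. A\<inter>Y\<noteq>{}}. A)" using \<mu>_E by simp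
  also have "\<dots> \<le> (\<Sum>A\<in>{A\<in>Q m. A\<inter>Y\<noteq>{}}. \<mu> A)" by (rule mu_UN[OF fin])
  finally show ?thesis .
qed

definition cen :: "real \<Rightarrow> 'a set \<Rightarrow> 'a set \<Rightarrow> 'a" where
  "cen d S B = (SOME c. c \<in> S \<and> B = cball c d)"

lemma cen:
  assumes "delta_packing d S \<B>" "B \<in> \<B>"
  shows "cen d S B \<in> S \<and> cball (cen d S B) d = B"
proof -
  have "\<exists>c. c \<in> S \<and> B = cball c d" using assms unfolding delta_packing_def by blast
  then have "cen d S B \<in> S \<and> B = cball (cen d S B) d" unfolding cen_def by (rule someI_ex)
  then show ?thesis by (elim conjE) (intro conjI, assumption, rule sym)
qed

lemma cen_sep:
  assumes P: "delta_packing d S \<B>" and d: "d > 0" and B: "B \<in> \<B>" "B' \<in> \<B>" "B \<noteq> B'"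
  shows "dist (cen d S B) (cen d S B') > d"
proof (rule ccontr)
  assume "\<not> ?thesis"
  then have "cen d S B' \<in> cball (cen d S B) d" by (simp add: not_less)
  moreover have "cball (cen d S B) d = B" using cen[OF P B(1)] by (rule conjunct2)
  ultimately have "cen d S B' \<in> B" by simp
  moreover have "cball (cen d S B') d = B'" using cen[OF P B(2)] by (rule conjunct2)
  moreover have "cen d S B' \<in> cball (cen d S B') d" using d by simp
  ultimately have "cen d S B' \<in> B'" by simp
  moreover have "B \<inter> B' = {}" using P B unfolding delta_packing_def by blast
  ultimately show False using \<open>cen d S B' \<in> B\<close> by blast
qed

lemma cen_inj: assumes P: "delta_packing d S \<B>" shows "inj_on (cen d S) \<B>"
proof (rule inj_onI)
  fix B B' assume h: "B \<in> \<B>" "B' \<in> \<B>" "cen d S B = cen d S B'"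
  have "B = cball (cen d S B) d" using cen[OF P h(1)] by simp
  also have "\<dots> = cball (cen d S B') d" using h(3) by simp
  also have "\<dots> = B'" using cen[OF P h(2)] by simp
  finally show "B = B'" .
qed

lemma pack_meet:
  fixes Y :: "'a set"
  assumes P: "delta_packing d S \<B>" and d: "d > 0" and Y: "Y \<subseteq> cball y R" and R: "R \<ge> 0"
  shows "finite {B\<in>\<B>. B\<inter>Y\<noteq>{}} \<and> card {B\<in>\<B>. B\<inter>Y\<noteq>{}} \<le> cnt ((R + d)/d)"
proof -
  define CC where "CC = {B\<in>\<B>. B\<inter>Y\<noteq>{}}"
  have sub: "cen d S ` CC \<subseteq> cball y (R + d)"
  proof
    fix p assume "p \<in> cen d S ` CC"
    then obtain B where B: "B \<in> \<B>" "B \<inter> Y \<noteq> {}" "p = cen d S B" unfolding CC_def by blast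
    then obtain w where w: "w \<in> B" "w \<in> Y" by blast
    have d1: "dist y w \<le> R" using Y w(2) by auto
    have "cball (cen d S B) d = B" using cen[OF P B(1)] by (rule conjunct2)
    then have "cball p d = B" using B(3) by simp
    then have "w \<in> cball p d" using w(1) by simp
    then have "dist p w \<le> d" by simp
    then have "dist y p \<le> R + d" using d1 dist_triangle[of y p w] by (simp add: dist_commute)
    then show "p \<in> cball y (R + d)" by simp
  qed
  have sep: "\<forall>p\<in>cen d S ` CC. \<forall>p'\<in>cen d S ` CC. p\<noteq>p' \<longrightarrow> dist p p' > d"
  proof (intro ballI impI)
    fix p p' assume "p \<in> cen d S ` CC" "p' \<in> cen d S ` CC" "p \<noteq> p'"
    then obtain B B' where "B \<in> \<B>" "B' \<in> \<B>" "p = cen d S B" "p' = cen d S B'" unfolding CC_def by blast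
    then show "dist p p' > d" using cen_sep[OF P d] \<open>p \<noteq> p'\<close> by blast
  qed
  have pos: "R + d > 0" using R d by linarith
  have fc: "finite (cen d S ` CC) \<and> card (cen d S ` CC) \<le> cnt ((R + d)/d)"
    by (rule sepc[OF d pos sub sep])
  have inj: "inj_on (cen d S) CC" by (rule inj_on_subset[OF cen_inj[OF P]]) (auto simp: CC_def)
  have "finite CC" using finite_imageD[OF conjunct1[OF fc] inj] .
  moreover have "card CC \<le> cnt ((R + d)/d)" using fc card_image[OF inj] by simp
  ultimately show ?thesis unfolding CC_def by blast
qed

lemma pack_fin:
  fixes x :: 'a
  assumes P: "delta_packing d (cball x r \<inter> T) \<B>" and d: "d > 0" and r: "r \<ge> 0"
  shows "finite \<B> \<and> card \<B> \<le> cnt ((r + d)/d)"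
proof -
  have "{B\<in>\<B>. B \<inter> cball x r \<noteq> {}} = \<B>"
  proof (intro set_eqI iffI)
    fix B assume B: "B \<in> \<B>"
    have c: "cen d (cball x r \<inter> T) B \<in> cball x r \<inter> T \<and> cball (cen d (cball x r \<inter> T) B) d = B"
      by (rule cen[OF P B])
    have "cen d (cball x r \<inter> T) B \<in> cball (cen d (cball x r \<inter> T) B) d" using d by simp
    then have "cen d (cball x r \<inter> T) B \<in> B" using c by simp
    then have "cen d (cball x r \<inter> T) B \<in> B \<inter> cball x r" using c by blast
    then show "B \<in> {B\<in>\<B>. B \<inter> cball x r \<noteq> {}}" using B by blast
  qed simp
  moreover have "finite {B\<in>\<B>. B \<inter> cball x r \<noteq> {}} \<and> card {B\<in>\<B>. B \<inter> cball x r \<noteq> {}} \<le> cnt ((r + d)/d)"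
    by (rule pack_meet[OF P d subset_refl r])
  ultimately show ?thesis by simp
qed

end

context setting begin

definition Sr :: "'a \<Rightarrow> real \<Rightarrow> real \<Rightarrow> real" where
  "Sr x r d = enn2real (S_q \<mu> q (cball x r) d)"
definition Qs :: "'a \<Rightarrow> nat \<Rightarrow> real \<Rightarrow> real" where
  "Qs x m r = (\<Sum>A\<in>{A\<in>Q m. A \<inter> cball x r \<noteq> {}}. enn2real (\<mu> A) powr q)"

lemma mpow_sum: "finite F \<Longrightarrow> infsum (mpow \<mu> q) F = ennreal (\<Sum>B\<in>F. enn2real (\<mu> B) powr q)"
proof -
  assume F: "finite F"
  have "infsum (mpow \<mu> q) F = (\<Sum>B\<in>F. mpow \<mu> q B)" by (rule infsum_finite[OF F])
  also have "\<dots> = (\<Sum>B\<in>F. ennreal (enn2real (\<mu> B) powr q))" unfolding mpow_def by simp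
  also have "\<dots> = ennreal (\<Sum>B\<in>F. enn2real (\<mu> B) powr q)" by (rule sum_ennreal) simp
  finally show ?thesis .
qed

lemma Qs_eq:
  assumes r: "r \<ge> 0"
  shows "enn2real (\<Sum>\<^sub>\<infinity>A\<in>{A\<in>Q m. A \<inter> cball x r \<noteq> {}}. mpow \<mu> q A) = Qs x m r"
proof -
  have fin: "finite {A\<in>Q m. A \<inter> cball x r \<noteq> {}}" using cells_meet[OF subset_refl r] by blast
  have "(\<Sum>\<^sub>\<infinity>A\<in>{A\<in>Q m. A \<inter> cball x r \<noteq> {}}. mpow \<mu> q A) = ennreal (Qs x m r)"
    unfolding Qs_def using mpow_sum[OF fin] by simp
  moreover have "Qs x m r \<ge> 0" unfolding Qs_def by (rule sum_nonneg) simp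
  ultimately show ?thesis by simp
qed

lemma S_le:
  fixes x :: 'a
  assumes d: "d > 0" and r: "r \<ge> 0" and M: "M \<ge> 0"
    and H: "\<And>\<B>. delta_packing d (cball x r \<inter> spt \<mu>) \<B> \<Longrightarrow> finite \<B> \<Longrightarrow> (\<Sum>B\<in>\<B>. enn2real (\<mu> B) powr q) \<le> M"
  shows "S_q \<mu> q (cball x r) d \<le> ennreal M"
  unfolding S_q_def
proof (rule SUP_least)
  fix \<B> assume "\<B> \<in> {\<B>. delta_packing d (cball x r \<inter> spt \<mu>) \<B>}"
  then have P: "delta_packing d (cball x r \<inter> spt \<mu>) \<B>" by simp
  have fin: "finite \<B>" using pack_fin[OF P d r] by blast
  have "infsum (mpow \<mu> q) \<B> = ennreal (\<Sum>B\<in>\<B>. enn2real (\<mu> B) powr q)" by (rule mpow_sum[OF fin])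
  also have "\<dots> \<le> ennreal M" by (rule ennreal_leI) (rule H[OF P fin])
  finally show "(\<Sum>\<^sub>\<infinity>B\<in>\<B>. mpow \<mu> q B) \<le> ennreal M" by simp
qed

lemma S_ge:
  fixes x :: 'a
  assumes P: "delta_packing d (cball x r \<inter> spt \<mu>) \<B>" and fin: "finite \<B>"
  shows "ennreal (\<Sum>B\<in>\<B>. enn2real (\<mu> B) powr q) \<le> S_q \<mu> q (cball x r) d"
proof -
  have "(\<Sum>\<^sub>\<infinity>B\<in>\<B>. mpow \<mu> q B) \<le> S_q \<mu> q (cball x r) d"
    unfolding S_q_def by (rule SUP_upper) (simp add: P)
  then show ?thesis using mpow_sum[OF fin] by simp
qed

lemma S_fin:
  fixes x :: 'a
  assumes d: "d > 0" and r: "r \<ge> 0"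
  shows "S_q \<mu> q (cball x r) d \<noteq> top"
proof -
  define b where "b = enn2real (\<mu> (cball x (r+d))) powr q"
  define M where "M = real (cnt ((r + d)/d)) * b"
  have b0: "b \<ge> 0" unfolding b_def by simp
  have M0: "M \<ge> 0" unfolding M_def using b0 by simp
  have "S_q \<mu> q (cball x r) d \<le> ennreal M"
  proof (rule S_le[OF d r M0])
    fix \<B> assume P: "delta_packing d (cball x r \<inter> spt \<mu>) \<B>" and fin: "finite \<B>"
    have each: "enn2real (\<mu> B) powr q \<le> b" if B: "B \<in> \<B>" for B
    proof -
      have c: "cen d (cball x r \<inter> spt \<mu>) B \<in> cball x r \<inter> spt \<mu> \<and> cball (cen d (cball x r \<inter> spt \<mu>) B) d = B"
        by (rule cen[OF P B])
      have "B \<subseteq> cball x (r+d)"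
      proof
        fix w assume "w \<in> B"
        then have "w \<in> cball (cen d (cball x r \<inter> spt \<mu>) B) d" using c by simp
        then have "dist (cen d (cball x r \<inter> spt \<mu>) B) w \<le> d" by simp
        moreover have "dist x (cen d (cball x r \<inter> spt \<mu>) B) \<le> r" using c by simp
        ultimately show "w \<in> cball x (r+d)" using dist_triangle[of x w "cen d (cball x r \<inter> spt \<mu>) B"] by simp
      qed
      then have "\<mu> B \<le> \<mu> (cball x (r+d))" by (rule mu_mono)
      then have "enn2real (\<mu> B) \<le> enn2real (\<mu> (cball x (r+d)))"
        by (rule enn2real_mono) (rule mu_cball_fin[OF subset_refl])
      then show ?thesis unfolding b_def by (rule powr_mono2[OF q_nonneg enn2real_nonneg])
    qed
    have "(\<Sum>B\<in>\<B>. enn2real (\<mu> B) powr q) \<le> real (card \<B>) * b"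
      using sum_bounded_above[of \<B> "\<lambda>B. enn2real (\<mu> B) powr q" b] each by simp
    also have "\<dots> \<le> M" unfolding M_def using pack_fin[OF P d r] b0 by (intro mult_right_mono) simp_all
    finally show "(\<Sum>B\<in>\<B>. enn2real (\<mu> B) powr q) \<le> M" .
  qed
  moreover have "ennreal M < top" by simp
  ultimately show ?thesis by (metis top.not_eq_extremum order.strict_trans1)
qed

lemma Sr_ge:
  fixes x :: 'a
  assumes P: "delta_packing d (cball x r \<inter> spt \<mu>) \<B>" and d: "d > 0" and r: "r \<ge> 0"
  shows "(\<Sum>B\<in>\<B>. enn2real (\<mu> B) powr q) \<le> Sr x r d"
proof -
  have fin: "finite \<B>" using pack_fin[OF P d r] by blast
  have "enn2real (ennreal (\<Sum>B\<in>\<B>. enn2real (\<mu> B) powr q)) \<le> enn2real (S_q \<mu> q (cball x r) d)"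
    by (rule enn2real_mono[OF S_ge[OF P fin]]) (use S_fin[OF d r] top.not_eq_extremum in blast)
  moreover have "(\<Sum>B\<in>\<B>. enn2real (\<mu> B) powr q) \<ge> 0" by (rule sum_nonneg) simp
  ultimately show ?thesis unfolding Sr_def by simp
qed

lemma Sr_le:
  fixes x :: 'a
  assumes d: "d > 0" and r: "r \<ge> 0" and M: "M \<ge> 0"
    and H: "\<And>\<B>. delta_packing d (cball x r \<inter> spt \<mu>) \<B> \<Longrightarrow> finite \<B> \<Longrightarrow> (\<Sum>B\<in>\<B>. enn2real (\<mu> B) powr q) \<le> M"
  shows "Sr x r d \<le> M"
  unfolding Sr_def by (rule enn2real_leI[OF M S_le[OF d r M H]])

lemma Sr_pos:
  fixes x :: 'a
  assumes x: "x \<in> spt \<mu>" and d: "d > 0" and r: "r \<ge> 0"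
  shows "Sr x r d > 0"
proof -
  have P: "delta_packing d (cball x r \<inter> spt \<mu>) {cball x d}"
    unfolding delta_packing_def using x r by auto
  have "\<mu> (ball x d) > 0" using x d unfolding spt_def by blast
  moreover have "\<mu> (ball x d) \<le> \<mu> (cball x d)" by (rule mu_mono) (rule ball_subset_cball)
  ultimately have pos: "\<mu> (cball x d) > 0" by (rule order.strict_trans2)
  have "\<mu> (cball x d) < top" by (rule mu_cball_fin[OF subset_refl])
  then have "enn2real (\<mu> (cball x d)) > 0" using pos by (simp add: enn2real_positive_iff)
  then have "enn2real (\<mu> (cball x d)) powr q > 0" by simp
  also have "\<dots> = (\<Sum>B\<in>{cball x d}. enn2real (\<mu> B) powr q)" by simp
  also have "\<dots> \<le> Sr x r d" by (rule Sr_ge[OF P d r])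
  finally show ?thesis .
qed

lemma Qs_pos:
  fixes x :: 'a
  assumes x: "x \<in> spt \<mu>" and r: "r > 0"
  shows "Qs x m r > 0"
proof -
  define CC where "CC = {A\<in>Q m. A \<inter> cball x r \<noteq> {}}"
  have fin: "finite CC" unfolding CC_def using cells_meet[OF subset_refl] r by simp
  have "\<mu> (ball x r) > 0" using x r unfolding spt_def by blast
  moreover have "\<mu> (ball x r) \<le> \<mu> (cball x r)" by (rule mu_mono) (rule ball_subset_cball)
  ultimately have pos: "\<mu> (cball x r) > 0" by (rule order.strict_trans2)
  have "\<exists>A\<in>CC. \<mu> A > 0"
  proof (rule ccontr)
    assume "\<not> ?thesis"
    then have z: "\<And>A. A \<in> CC \<Longrightarrow> \<mu> A = 0" by (simp add: not_less)
    have "\<mu> (cball x r) \<le> (\<Sum>A\<in>CC. \<mu> A)" unfolding CC_def by (rule cells_cover[OF subset_refl])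
    also have "\<dots> = 0" using z by simp
    finally show False using pos by simp
  qed
  then obtain A where A: "A \<in> CC" "\<mu> A > 0" by blast
  have AQ: "A \<in> Q m" using A(1) unfolding CC_def by blast
  have "\<mu> A < top" by (rule mu_cball_fin[OF oc[OF AQ]])
  then have "enn2real (\<mu> A) > 0" using A(2) by (simp add: enn2real_positive_iff)
  then have "enn2real (\<mu> A) powr q > 0" by simp
  then show ?thesis unfolding Qs_def CC_def[symmetric]
    by (intro sum_pos2[OF fin A(1)]) simp_all
qed

end

context setting begin

lemma enn_le_sum_real:
  assumes F: "finite F" and fin: "\<And>A. A \<in> F \<Longrightarrow> \<mu> A < top" and le: "\<mu> Y \<le> (\<Sum>A\<in>F. \<mu> A)"
  shows "enn2real (\<mu> Y) \<le> (\<Sum>A\<in>F. enn2real (\<mu> A))"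
proof -
  have lt: "(\<Sum>A\<in>F. \<mu> A) < top" using ennreal_sum_less_top[OF F] fin by blast
  have "enn2real (\<mu> Y) \<le> enn2real (\<Sum>A\<in>F. \<mu> A)" by (rule enn2real_mono[OF le lt])
  also have "\<dots> = (\<Sum>A\<in>F. enn2real (\<mu> A))" using enn2real_sum[of F \<mu>] fin by (simp add: o_def)
  finally show ?thesis .
qed

lemma core1:
  fixes x :: 'a
  assumes d: "d > 0" and dr: "d \<le> r" and K: "K \<ge> 1"
    and c1: "real (cnt ((d + 2*\<gamma> m)/\<delta> m)) \<le> K" and c2: "real (cnt ((\<gamma> m + d)/d)) \<le> K"
  shows "Sr x r d \<le> K powr (q+1) * Qs x m (2*r)"
proof -
  have r: "r \<ge> 0" using d dr by linarith
  define J where "J = {A\<in>Q m. A \<inter> cball x (2*r) \<noteq> {}}"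
  have "finite J \<and> card J \<le> cnt ((2*r + 2*\<gamma> m)/\<delta> m)" unfolding J_def
    by (rule cells_meet[OF subset_refl]) (use r in simp)
  then have Jfin: "finite J" by blast
  have M0: "K powr (q+1) * Qs x m (2*r) \<ge> 0" unfolding Qs_def by (intro mult_nonneg_nonneg sum_nonneg) simp_all
  show ?thesis
  proof (rule Sr_le[OF d r M0])
    fix \<B> assume P: "delta_packing d (cball x r \<inter> spt \<mu>) \<B>" and fin: "finite \<B>"
    have key: "(\<Sum>B\<in>\<B>. enn2real (\<mu> B) powr q) \<le> K powr (q+1) * (\<Sum>A\<in>J. enn2real (\<mu> A) powr q)"
    proof (rule double_count[OF fin Jfin K q_nonneg, where R = "\<lambda>B A. A \<inter> B \<noteq> {}"])
      fix B assume B: "B \<in> \<B>"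
      define c where "c = cen d (cball x r \<inter> spt \<mu>) B"
      have cc: "c \<in> cball x r \<inter> spt \<mu> \<and> cball c d = B" unfolding c_def by (rule cen[OF P B])
      have Bsub: "B \<subseteq> cball c d" using cc by simp
      have B2: "B \<subseteq> cball x (2*r)"
      proof
        fix w assume "w \<in> B"
        then have "dist c w \<le> d" using cc by auto
        moreover have "dist x c \<le> r" using cc by simp
        ultimately show "w \<in> cball x (2*r)" using dist_triangle[of x w c] dr by simp
      qed
      have eq: "{A\<in>J. A \<inter> B \<noteq> {}} = {A\<in>Q m. A \<inter> B \<noteq> {}}" unfolding J_def using B2 by blast
      have cm: "finite {A\<in>Q m. A \<inter> B \<noteq> {}} \<and> card {A\<in>Q m. A \<inter> B \<noteq> {}} \<le> cnt ((d + 2*\<gamma> m)/\<delta> m)"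
        by (rule cells_meet[OF Bsub]) (use d in simp)
      have le: "\<mu> B \<le> (\<Sum>A\<in>{A\<in>Q m. A \<inter> B \<noteq> {}}. \<mu> A)" by (rule cells_cover[OF Bsub])
      have "enn2real (\<mu> B) \<le> (\<Sum>A\<in>{A\<in>Q m. A \<inter> B \<noteq> {}}. enn2real (\<mu> A))"
      proof (rule enn_le_sum_real[OF conjunct1[OF cm] _ le])
        fix A assume "A \<in> {A\<in>Q m. A \<inter> B \<noteq> {}}"
        then have "A \<in> Q m" by simp
        then show "\<mu> A < top" by (rule mu_cball_fin[OF oc])
      qed
      then show "enn2real (\<mu> B) \<le> (\<Sum>A\<in>{A\<in>J. A \<inter> B \<noteq> {}}. enn2real (\<mu> A))" using eq by simp
      show "real (card {A\<in>J. A \<inter> B \<noteq> {}}) \<le> K" using eq cm c1 by simp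
    next
      fix A assume A: "A \<in> J"
      then have AQ: "A \<in> Q m" unfolding J_def by blast
      have eq: "{B\<in>\<B>. A \<inter> B \<noteq> {}} = {B\<in>\<B>. B \<inter> A \<noteq> {}}" by blast
      have "finite {B\<in>\<B>. B \<inter> A \<noteq> {}} \<and> card {B\<in>\<B>. B \<inter> A \<noteq> {}} \<le> cnt ((\<gamma> m + d)/d)"
        by (rule pack_meet[OF P d oc[OF AQ]]) (use \<gamma>_pos[of m] in simp)
      then show "real (card {B\<in>\<B>. A \<inter> B \<noteq> {}}) \<le> K" using eq c2 by simp
    qed simp_all
    then show "(\<Sum>B\<in>\<B>. enn2real (\<mu> B) powr q) \<le> K powr (q+1) * Qs x m (2*r)"
      unfolding Qs_def J_def by simp
  qed
qed

end

context setting begin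

lemma color_sum:
  fixes x :: 'a and Z :: "'a set"
  assumes d: "d > 0" and Zfin: "finite Z" and ZT: "Z \<subseteq> spt \<mu> \<inter> cball x R" and R: "R \<ge> 0"
    and sep: "\<forall>z\<in>Z. \<forall>z'\<in>Z. z\<noteq>z' \<longrightarrow> dist z z' > d"
  shows "(\<Sum>z\<in>Z. enn2real (\<mu> (cball z d)) powr q) \<le> (real (cnt 2) + 1) * Sr x R d"
proof -
  define K0 where "K0 = cnt 2 + 1"
  define adj where "adj z z' \<longleftrightarrow> dist z z' \<le> 2*d" for z z' :: 'a
  have deg: "card {z'\<in>Z. z' \<noteq> z \<and> adj z z'} < K0" if z: "z \<in> Z" for z
  proof -
    have sub: "{z'\<in>Z. z' \<noteq> z \<and> adj z z'} \<subseteq> cball z (2*d)" unfolding adj_def by auto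
    have sp: "\<forall>p\<in>{z'\<in>Z. z' \<noteq> z \<and> adj z z'}. \<forall>p'\<in>{z'\<in>Z. z' \<noteq> z \<and> adj z z'}. p\<noteq>p' \<longrightarrow> dist p p' > d"
      using sep by blast
    have "finite {z'\<in>Z. z' \<noteq> z \<and> adj z z'} \<and> card {z'\<in>Z. z' \<noteq> z \<and> adj z z'} \<le> cnt ((2*d)/d)"
      by (rule sepc[OF d _ sub sp]) (use d in simp)
    moreover have "(2*d)/d = 2" using d by simp
    ultimately show ?thesis unfolding K0_def by simp
  qed
  have sym: "adj z z' \<Longrightarrow> adj z' z" for z z' unfolding adj_def by (simp add: dist_commute)
  from greedy_color[OF Zfin sym deg] obtain col where col0: "(\<forall>z\<in>Z. col z < K0) \<and> (\<forall>z\<in>Z. \<forall>z'\<in>Z. z \<noteq> z' \<and> adj z z' \<longrightarrow> col z \<noteq> col z')" ..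
  note col = conjunct1[OF col0] conjunct2[OF col0]
  define f where "f z = enn2real (\<mu> (cball z d)) powr q" for z
  have cls: "(\<Sum>z\<in>{z\<in>Z. col z = k}. f z) \<le> Sr x R d" for k
  proof -
    define Zk where "Zk = {z\<in>Z. col z = k}"
    define \<B> where "\<B> = (\<lambda>z. cball z d) ` Zk"
    have inj: "inj_on (\<lambda>z. cball z d) Zk"
    proof (rule inj_onI)
      fix z z' assume h: "z \<in> Zk" "z' \<in> Zk" "cball z d = cball z' d"
      show "z = z'"
      proof (rule ccontr)
        assume ne: "z \<noteq> z'"
        have "z' \<in> cball z' d" using d by simp
        then have "z' \<in> cball z d" using h(3) by simp
        then have "dist z z' \<le> d" by simp
        moreover have "dist z z' > d" using sep h(1,2) ne unfolding Zk_def by blast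
        ultimately show False by simp
      qed
    qed
    have P: "delta_packing d (cball x R \<inter> spt \<mu>) \<B>"
      unfolding delta_packing_def
    proof (intro conjI ballI impI)
      show "countable \<B>" unfolding \<B>_def Zk_def using Zfin by (simp add: countable_finite)
    next
      fix B1 B2 assume B: "B1 \<in> \<B>" "B2 \<in> \<B>" "B1 \<noteq> B2"
      then obtain z1 z2 where z: "z1 \<in> Zk" "z2 \<in> Zk" "B1 = cball z1 d" "B2 = cball z2 d" unfolding \<B>_def by blast
      have ne: "z1 \<noteq> z2"
      proof
        assume "z1 = z2"
        then have "B1 = B2" using z(3,4) by simp
        then show False using B(3) by simp
      qed
      have "\<not> adj z1 z2"
      proof
        assume "adj z1 z2"
        then have "col z1 \<noteq> col z2" using col(2) z(1,2) ne unfolding Zk_def by blast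
        then show False using z(1,2) unfolding Zk_def by simp
      qed
      then have far: "dist z1 z2 > 2*d" unfolding adj_def by simp
      show "B1 \<inter> B2 = {}"
      proof (rule ccontr)
        assume "B1 \<inter> B2 \<noteq> {}"
        then have "cball z1 d \<inter> cball z2 d \<noteq> {}" using z(3,4) by simp
        then obtain w where "w \<in> cball z1 d" "w \<in> cball z2 d" by blast
        then have "dist z1 w \<le> d" "dist z2 w \<le> d" by simp_all
        then have "dist z1 z2 \<le> 2*d" using dist_triangle[of z1 z2 w] by (simp add: dist_commute)
        then show False using far by simp
      qed
    next
      fix B assume "B \<in> \<B>"
      then obtain z where z: "z \<in> Zk" "B = cball z d" unfolding \<B>_def by blast
      then have "z \<in> cball x R \<inter> spt \<mu>" using ZT unfolding Zk_def by blast
      then show "\<exists>c\<in>cball x R \<inter> spt \<mu>. B = cball c d" using z(2) by blast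
    qed
    have "(\<Sum>z\<in>Zk. f z) = (\<Sum>B\<in>\<B>. enn2real (\<mu> B) powr q)"
      unfolding \<B>_def f_def by (simp add: sum.reindex[OF inj] o_def)
    also have "\<dots> \<le> Sr x R d" by (rule Sr_ge[OF P d R])
    finally show ?thesis unfolding Zk_def .
  qed
  have "(\<Sum>k\<in>{..<K0}. \<Sum>z\<in>{z\<in>Z. col z = k}. f z) = (\<Sum>z\<in>Z. \<Sum>k\<in>{k\<in>{..<K0}. col z = k}. f z)"
    by (rule sum.swap_restrict) (simp_all add: Zfin)
  also have "\<dots> = (\<Sum>z\<in>Z. f z)"
  proof (rule sum.cong[OF refl])
    fix z assume "z \<in> Z"
    then have "{k\<in>{..<K0}. col z = k} = {col z}" using col(1) by auto
    then show "(\<Sum>k\<in>{k\<in>{..<K0}. col z = k}. f z) = f z" by simp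
  qed
  finally have "(\<Sum>z\<in>Z. f z) = (\<Sum>k\<in>{..<K0}. \<Sum>z\<in>{z\<in>Z. col z = k}. f z)" by simp
  also have "\<dots> \<le> (\<Sum>k\<in>{..<K0}. Sr x R d)" by (rule sum_mono) (rule cls)
  also have "\<dots> = real K0 * Sr x R d" by simp
  finally show ?thesis unfolding f_def K0_def by (simp add: add.commute)
qed

end

context setting begin

lemma core2:
  fixes x :: 'a
  assumes x: "x \<in> spt \<mu>" and r: "r > 0" and g: "2*\<gamma> n \<le> r" and K: "K \<ge> 1"
    and c1: "real (cnt ((\<delta> n + 2*\<gamma> n)/\<delta> n)) \<le> K" and c2: "real (cnt ((\<gamma> n + \<delta> n)/\<delta> n)) \<le> K"
  shows "Qs x n r \<le> K powr (q+1) * ((real (cnt 2) + 1) * Sr x (2*r) (\<delta> n))"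
proof -
  define d where "d = \<delta> n"
  have d: "d > 0" unfolding d_def by (rule \<delta>_pos)
  define R0 where "R0 = r + 2*\<gamma> n"
  have R0: "R0 > 0" unfolding R0_def using r \<gamma>_pos[of n] by linarith
  have R02: "R0 \<le> 2*r" unfolding R0_def using g by linarith
  define T where "T = spt \<mu> \<inter> cball x R0"
  have Tsub: "T \<subseteq> cball x R0" unfolding T_def by blast
  obtain Z where Z: "Z \<subseteq> T" "finite Z" "\<forall>z\<in>Z. \<forall>z'\<in>Z. z\<noteq>z' \<longrightarrow> dist z z' > d" "\<forall>t\<in>T. \<exists>z\<in>Z. dist t z \<le> d"
    using max_sep[OF d R0 Tsub] by blast
  define CC where "CC = {A\<in>Q n. A \<inter> cball x r \<noteq> {}}"
  have "finite CC \<and> card CC \<le> cnt ((r + 2*\<gamma> n)/\<delta> n)" unfolding CC_def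
    by (rule cells_meet[OF subset_refl]) (use r in simp)
  then have CCfin: "finite CC" by blast
  have key: "(\<Sum>A\<in>CC. enn2real (\<mu> A) powr q) \<le> K powr (q+1) * (\<Sum>z\<in>Z. enn2real (\<mu> (cball z d)) powr q)"
  proof (rule double_count[OF CCfin Z(2) K q_nonneg, where R = "\<lambda>A z. cball z d \<inter> A \<noteq> {}"])
    fix A assume A: "A \<in> CC"
    then have AQ: "A \<in> Q n" and Ax: "A \<inter> cball x r \<noteq> {}" unfolding CC_def by blast+
    define o' where "o' = oc n A"
    have Ao: "A \<subseteq> cball o' (\<gamma> n)" unfolding o'_def by (rule oc[OF AQ])
    have AR0: "A \<subseteq> cball x R0"
    proof
      fix a assume a: "a \<in> A"
      obtain w where w: "w \<in> A" "w \<in> cball x r" using Ax by blast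
      have "dist o' w \<le> \<gamma> n" "dist o' a \<le> \<gamma> n" using Ao w(1) a by auto
      then have "dist w a \<le> 2*\<gamma> n" using dist_triangle[of w a o'] by (simp add: dist_commute)
      moreover have "dist x w \<le> r" using w(2) by simp
      ultimately show "a \<in> cball x R0" unfolding R0_def using dist_triangle[of x a w] by simp
    qed
    define ZA where "ZA = {z\<in>Z. cball z d \<inter> A \<noteq> {}}"
    have ZAfin: "finite ZA" unfolding ZA_def using Z(2) by simp
    have cov: "A \<subseteq> (A - spt \<mu>) \<union> (\<Union>z\<in>ZA. cball z d)"
    proof
      fix a assume a: "a \<in> A"
      show "a \<in> (A - spt \<mu>) \<union> (\<Union>z\<in>ZA. cball z d)"
      proof (cases "a \<in> spt \<mu>")
        case True
        then have "a \<in> T" unfolding T_def using AR0 a by blast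
        then obtain z where z: "z \<in> Z" "dist a z \<le> d" using Z(4) by blast
        then have az: "a \<in> cball z d" by (simp add: dist_commute)
        then have "z \<in> ZA" unfolding ZA_def using z(1) a by blast
        then show ?thesis using az by blast
      qed (use a in blast)
    qed
    have "\<mu> A \<le> \<mu> ((A - spt \<mu>) \<union> (\<Union>z\<in>ZA. cball z d))" by (rule mu_mono[OF cov])
    also have "\<dots> \<le> \<mu> (A - spt \<mu>) + \<mu> (\<Union>z\<in>ZA. cball z d)" by (rule mu_un)
    also have "\<dots> = \<mu> (\<Union>z\<in>ZA. cball z d)" using null_outside_spt[OF Ao] by simp
    also have "\<dots> \<le> (\<Sum>z\<in>ZA. \<mu> (cball z d))" by (rule mu_UN[OF ZAfin])
    finally have le: "\<mu> A \<le> (\<Sum>z\<in>ZA. \<mu> (cball z d))" .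
    have lt: "(\<Sum>z\<in>ZA. \<mu> (cball z d)) < top"
      using ennreal_sum_less_top[OF ZAfin] mu_cball_fin[OF subset_refl] by blast
    have "enn2real (\<mu> A) \<le> enn2real (\<Sum>z\<in>ZA. \<mu> (cball z d))" by (rule enn2real_mono[OF le lt])
    also have "\<dots> = (\<Sum>z\<in>ZA. enn2real (\<mu> (cball z d)))"
      using enn2real_sum[of ZA "\<lambda>z. \<mu> (cball z d)"] mu_cball_fin[OF subset_refl] by (simp add: o_def)
    finally show "enn2real (\<mu> A) \<le> (\<Sum>z\<in>{z\<in>Z. cball z d \<inter> A \<noteq> {}}. enn2real (\<mu> (cball z d)))"
      unfolding ZA_def .
    have sub: "ZA \<subseteq> cball o' (\<gamma> n + d)"
    proof
      fix z assume "z \<in> ZA"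
      then obtain w where w: "w \<in> cball z d" "w \<in> A" unfolding ZA_def by blast
      have "dist o' w \<le> \<gamma> n" using Ao w(2) by auto
      moreover have "dist z w \<le> d" using w(1) by simp
      ultimately show "z \<in> cball o' (\<gamma> n + d)" using dist_triangle[of o' z w] by (simp add: dist_commute)
    qed
    have sp: "\<forall>p\<in>ZA. \<forall>p'\<in>ZA. p\<noteq>p' \<longrightarrow> dist p p' > d" using Z(3) unfolding ZA_def by blast
    have "finite ZA \<and> card ZA \<le> cnt ((\<gamma> n + d)/d)"
      by (rule sepc[OF d _ sub sp]) (use d \<gamma>_pos[of n] in simp)
    then show "real (card {z\<in>Z. cball z d \<inter> A \<noteq> {}}) \<le> K" using c2 unfolding ZA_def d_def by simp
  next
    fix z assume z: "z \<in> Z"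
    have cm: "finite {A\<in>Q n. A \<inter> cball z d \<noteq> {}} \<and> card {A\<in>Q n. A \<inter> cball z d \<noteq> {}} \<le> cnt ((d + 2*\<gamma> n)/\<delta> n)"
      by (rule cells_meet[OF subset_refl]) (use d in simp)
    have "{A\<in>CC. cball z d \<inter> A \<noteq> {}} \<subseteq> {A\<in>Q n. A \<inter> cball z d \<noteq> {}}" unfolding CC_def by blast
    then have "card {A\<in>CC. cball z d \<inter> A \<noteq> {}} \<le> card {A\<in>Q n. A \<inter> cball z d \<noteq> {}}"
      by (rule card_mono[OF conjunct1[OF cm]])
    then show "real (card {A\<in>CC. cball z d \<inter> A \<noteq> {}}) \<le> K" using cm c1 unfolding d_def by simp
  qed simp_all
  have ZT: "Z \<subseteq> spt \<mu> \<inter> cball x (2*r)" using Z(1) R02 unfolding T_def by auto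
  have cs: "(\<Sum>z\<in>Z. enn2real (\<mu> (cball z d)) powr q) \<le> (real (cnt 2) + 1) * Sr x (2*r) d"
    by (rule color_sum[OF d Z(2) ZT _ Z(3)]) (use r in simp)
  have Kq: "K powr (q+1) \<ge> 0" by simp
  have "Qs x n r \<le> K powr (q+1) * (\<Sum>z\<in>Z. enn2real (\<mu> (cball z d)) powr q)"
    using key unfolding Qs_def CC_def .
  also have "\<dots> \<le> K powr (q+1) * ((real (cnt 2) + 1) * Sr x (2*r) d)" by (rule mult_left_mono[OF cs Kq])
  finally show ?thesis unfolding d_def .
qed

end

context setting begin

definition M :: "nat \<Rightarrow> real" where "M n = real (cnt (3*\<gamma> n/\<delta> (Suc n)))"
definition C :: "nat \<Rightarrow> real" where "C n = M n powr (q+1) * (real (cnt 2) + 1)"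

lemma cnt_ge1: "real (cnt t) \<ge> 1"
  unfolding cntN_def using N1 by simp

lemma M_ge1: "M n \<ge> 1" unfolding M_def by (rule cnt_ge1)

lemma C_ge1: "C n \<ge> 1"
proof -
  have "M n powr (q+1) \<ge> 1" by (rule ge_one_powr_ge_zero[OF M_ge1]) (use q_nonneg in simp)
  moreover have "real (cnt 2) + 1 \<ge> 1" by simp
  ultimately show ?thesis unfolding C_def by (metis mult_mono' mult_1 zero_le_one)
qed

lemma delta_lim: "\<delta> \<longlonglongrightarrow> 0"
proof (rule tendsto_sandwich[of "\<lambda>_. 0" _ _ \<gamma>])
  show "\<forall>\<^sub>F n in sequentially. 0 \<le> \<delta> n" using \<delta>_pos by (simp add: less_imp_le)
  show "\<forall>\<^sub>F n in sequentially. \<delta> n \<le> \<gamma> n" using \<delta>_le_\<gamma> by simp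
qed (simp_all add: \<gamma>_lim)

lemma delta_filterlim: "filterlim \<delta> (at_right 0) sequentially"
  by (rule tendsto_imp_filterlim_at_right[OF delta_lim]) (simp add: \<delta>_pos)

lemma ln_delta_bot: "filterlim (\<lambda>n. ln (\<delta> n)) at_bot sequentially"
  by (rule filterlim_compose[OF ln_at_0 delta_filterlim])

lemma ev_delta_lt1: "eventually (\<lambda>n. \<delta> n < 1) sequentially"
  using order_tendstoD(2)[OF delta_lim, of 1] by simp

lemma ratio_inv: "(\<lambda>n. ln (\<delta> (Suc n)) / ln (\<delta> n)) \<longlonglongrightarrow> 1"
proof -
  have "(\<lambda>n. inverse (ln (\<delta> n) / ln (\<delta> (Suc n)))) \<longlonglongrightarrow> inverse 1"
    by (rule tendsto_inverse[OF \<delta>_ratio]) simp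
  then show ?thesis by simp
qed

lemma const_div_ln: "(\<lambda>n. a / ln (\<delta> n)) \<longlonglongrightarrow> 0"
  by (rule tendsto_divide_0[OF tendsto_const filterlim_mono[OF ln_delta_bot at_bot_le_at_infinity order_refl]])

lemma lnC_bound: "ln (C n) \<le> (q+1) * ((ln 6 + ln (\<gamma> n) - ln (\<delta> (Suc n))) / ln 2 + 1) * ln N + ln (real (cnt 2) + 1)"
   and lnC_nonneg: "ln (C n) \<ge> 0"
proof -
  define t where "t = 3*\<gamma> n/\<delta> (Suc n)"
  have t3: "t \<ge> 3"
  proof -
    have "\<delta> (Suc n) \<le> \<gamma> n" using \<delta>_dec \<delta>_le_\<gamma>[of n] by (metis decseq_Suc_iff order_trans)
    then show ?thesis unfolding t_def using \<delta>_pos[of "Suc n"] by (simp add: field_simps)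
  qed
  define k where "k = nat \<lceil>log 2 (2*t)\<rceil>"
  have lg0: "log 2 (2*t) \<ge> 0" using t3 by simp
  have kle: "real k \<le> log 2 (2*t) + 1" unfolding k_def using lg0 by linarith
  have Mn: "M n = real N ^ k" unfolding M_def cntN_def k_def t_def by simp
  have N0: "real N > 0" using N1 by simp
  have lnN: "ln (real N) \<ge> 0" using N1 by simp
  have lnM: "ln (M n) = real k * ln N" unfolding Mn using N0 by (simp add: ln_realpow)
  have Mpos: "M n > 0" using M_ge1[of n] by simp
  have c2: "real (cnt 2) + 1 > 0" by simp
  have lnC: "ln (C n) = (q+1) * ln (M n) + ln (real (cnt 2) + 1)"
    unfolding C_def using Mpos c2 by (simp add: ln_mult ln_powr)
  have "log 2 (2*t) = (ln 6 + ln (\<gamma> n) - ln (\<delta> (Suc n))) / ln 2"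
  proof -
    have "2*t = 6 * \<gamma> n / \<delta> (Suc n)" unfolding t_def by simp
    then have "ln (2*t) = ln 6 + ln (\<gamma> n) - ln (\<delta> (Suc n))"
      using \<gamma>_pos[of n] \<delta>_pos[of "Suc n"] by (simp add: ln_div ln_mult)
    then show ?thesis by (simp add: log_def)
  qed
  then have kle': "real k \<le> (ln 6 + ln (\<gamma> n) - ln (\<delta> (Suc n))) / ln 2 + 1" using kle by simp
  have q1: "q + 1 \<ge> 0" using q_nonneg by simp
  have "(q+1) * ln (M n) \<le> (q+1) * (((ln 6 + ln (\<gamma> n) - ln (\<delta> (Suc n))) / ln 2 + 1) * ln N)"
    unfolding lnM by (rule mult_left_mono[OF mult_right_mono[OF kle' lnN] q1])
  then show "ln (C n) \<le> (q+1) * ((ln 6 + ln (\<gamma> n) - ln (\<delta> (Suc n))) / ln 2 + 1) * ln N + ln (real (cnt 2) + 1)"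
    unfolding lnC by (simp add: mult.assoc)
  show "ln (C n) \<ge> 0" using C_ge1[of n] by simp
qed

lemma lnC_lim: "(\<lambda>n. ln (C n) / ln (\<delta> n)) \<longlonglongrightarrow> 0"
proof -
  define A where "A = (q+1) * (ln 6 / ln 2 + 1) * ln N + ln (real (cnt 2) + 1)"
  define B where "B = (q+1) * ln N / ln 2"
  define U where "U n = A + B * (ln (\<gamma> n) - ln (\<delta> (Suc n)))" for n
  have UC: "ln (C n) \<le> U n" for n
  proof -
    have "(q+1) * ((ln 6 + ln (\<gamma> n) - ln (\<delta> (Suc n))) / ln 2 + 1) * ln N + ln (real (cnt 2) + 1) = U n"
      unfolding U_def A_def B_def by (simp add: field_simps)
    then show ?thesis using lnC_bound[of n] by simp
  qed
  have "(\<lambda>n. A / ln (\<delta> n) + B * (ln (\<gamma> n) / ln (\<delta> n) - ln (\<delta> (Suc n)) / ln (\<delta> n))) \<longlonglongrightarrow> 0 + B * (1 - 1)"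
    by (intro tendsto_add tendsto_mult tendsto_diff const_div_ln tendsto_const \<gamma>\<delta>_ratio ratio_inv)
  then have lim: "(\<lambda>n. A / ln (\<delta> n) + B * (ln (\<gamma> n) / ln (\<delta> n) - ln (\<delta> (Suc n)) / ln (\<delta> n))) \<longlonglongrightarrow> 0" by simp
  have eqU: "U n / ln (\<delta> n) = A / ln (\<delta> n) + B * (ln (\<gamma> n) / ln (\<delta> n) - ln (\<delta> (Suc n)) / ln (\<delta> n))" for n
  proof -
    have "U n / ln (\<delta> n) = A / ln (\<delta> n) + B * ((ln (\<gamma> n) - ln (\<delta> (Suc n))) / ln (\<delta> n))"
      unfolding U_def by (simp add: add_divide_distrib)
    also have "(ln (\<gamma> n) - ln (\<delta> (Suc n))) / ln (\<delta> n) = ln (\<gamma> n) / ln (\<delta> n) - ln (\<delta> (Suc n)) / ln (\<delta> n)"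
      by (rule diff_divide_distrib)
    finally show ?thesis .
  qed
  show ?thesis
  proof (rule tendsto_sandwich[of "\<lambda>n. U n / ln (\<delta> n)" _ _ "\<lambda>_. 0"])
    show "\<forall>\<^sub>F n in sequentially. U n / ln (\<delta> n) \<le> ln (C n) / ln (\<delta> n)"
      using ev_delta_lt1
    proof (rule eventually_mono)
      fix n assume "\<delta> n < 1"
      then have "ln (\<delta> n) < 0" using \<delta>_pos[of n] by simp
      then show "U n / ln (\<delta> n) \<le> ln (C n) / ln (\<delta> n)" by (intro divide_right_mono_neg UC) simp
    qed
    show "\<forall>\<^sub>F n in sequentially. ln (C n) / ln (\<delta> n) \<le> 0"
      using ev_delta_lt1
    proof (rule eventually_mono)
      fix n assume "\<delta> n < 1"
      then have "ln (\<delta> n) < 0" using \<delta>_pos[of n] by simp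
      then show "ln (C n) / ln (\<delta> n) \<le> 0" using lnC_nonneg[of n] by (simp add: divide_nonneg_neg)
    qed
    show "(\<lambda>n. U n / ln (\<delta> n)) \<longlonglongrightarrow> 0" using lim unfolding eqU .
  qed simp
qed

lemma lnC_lim2: "(\<lambda>n. ln (C n) / ln (\<delta> (Suc n))) \<longlonglongrightarrow> 0"
proof -
  have "(\<lambda>n. (ln (C n) / ln (\<delta> n)) * (ln (\<delta> n) / ln (\<delta> (Suc n)))) \<longlonglongrightarrow> 0 * 1"
    by (rule tendsto_mult[OF lnC_lim \<delta>_ratio])
  then have lim: "(\<lambda>n. (ln (C n) / ln (\<delta> n)) * (ln (\<delta> n) / ln (\<delta> (Suc n)))) \<longlonglongrightarrow> 0" by simp
  show ?thesis
  proof (rule Lim_transform_eventually[OF lim])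
    show "\<forall>\<^sub>F n in sequentially. ln (C n) / ln (\<delta> n) * (ln (\<delta> n) / ln (\<delta> (Suc n))) = ln (C n) / ln (\<delta> (Suc n))"
      using ev_delta_lt1
    proof (rule eventually_mono)
      fix n assume "\<delta> n < 1"
      then have "ln (\<delta> n) \<noteq> 0" using \<delta>_pos[of n] by simp
      then show "ln (C n) / ln (\<delta> n) * (ln (\<delta> n) / ln (\<delta> (Suc n))) = ln (C n) / ln (\<delta> (Suc n))" by simp
    qed
  qed
qed

end

lemma helper1: "(s::real) \<ge> 0 \<Longrightarrow> a \<le> b \<Longrightarrow> b < 0 \<Longrightarrow> s / b \<le> s / a"
proof -
  assume h: "s \<ge> 0" "a \<le> b" "b < 0"
  have "0 < a * b" using h by (intro mult_neg_neg) simp_all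
  then have "s / (-a) \<le> s / (-b)" by (intro divide_left_mono) (use h in auto)
  then show ?thesis by simp
qed

lemma helper2: "(s::real) \<le> 0 \<Longrightarrow> b \<le> a \<Longrightarrow> a < 0 \<Longrightarrow> s / b \<le> s / a"
proof -
  assume h: "s \<le> 0" "b \<le> a" "a < 0"
  have "0 < b * a" using h by (intro mult_neg_neg) simp_all
  then have "(-s) / (-b) \<le> (-s) / (-a)" by (intro divide_left_mono) (use h in auto)
  then show ?thesis by simp
qed

lemma helper3: "(s::real) \<le> c + u \<Longrightarrow> b < 0 \<Longrightarrow> c / b + u / b \<le> s / b"
proof -
  assume h: "s \<le> c + u" "b < 0"
  have "(c + u) / b \<le> s / b" by (rule divide_right_mono_neg) (use h in auto)
  then show ?thesis by (simp add: add_divide_distrib)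
qed

lemma ln_prod_le: "(S::real) > 0 \<Longrightarrow> Qv > 0 \<Longrightarrow> Cv > 0 \<Longrightarrow> S \<le> Cv * Qv \<Longrightarrow> ln S \<le> ln Cv + ln Qv"
proof -
  assume h: "S > 0" "Qv > 0" "Cv > 0" "S \<le> Cv * Qv"
  have "ln S \<le> ln (Cv * Qv)" using h by simp
  also have "\<dots> = ln Cv + ln Qv" using h by (simp add: ln_mult)
  finally show ?thesis .
qed

context setting begin

lemma bracket:
  assumes d: "d > 0" and dn: "d < \<delta> n0"
  shows "\<exists>n\<ge>n0. \<delta> (Suc n) \<le> d \<and> d < \<delta> n"
proof -
  have "eventually (\<lambda>m. \<delta> m < d) sequentially" by (rule order_tendstoD(2)[OF delta_lim d])
  then obtain m where m: "\<delta> m < d" using eventually_sequentially by auto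
  define m0 where "m0 = (LEAST m. \<delta> m \<le> d)"
  have m0: "\<delta> m0 \<le> d" unfolding m0_def by (rule LeastI[of _ m]) (use m in simp)
  have big: "j \<le> n0 \<Longrightarrow> \<delta> j > d" for j
  proof -
    assume "j \<le> n0"
    then have "\<delta> n0 \<le> \<delta> j" using \<delta>_dec unfolding decseq_def by blast
    then show ?thesis using dn by simp
  qed
  have "m0 > n0" using big[of m0] m0 by (cases "m0 \<le> n0") auto
  then obtain n where n: "m0 = Suc n" "n \<ge> n0" by (metis Suc_le_eq less_imp_Suc_add le_add1 add_Suc)
  have "\<not> \<delta> n \<le> d" using n unfolding m0_def by (metis lessI not_less_Least)
  then show ?thesis using n m0 by (intro exI[of _ n]) auto
qed

lemma Sr_two:
  fixes x :: 'a
  assumes d: "d > 0" and dr: "d \<le> r" and lo: "\<delta> (Suc n) \<le> d" and hi: "d < \<delta> n"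
  shows "Sr x r d \<le> C n * Qs x n (2*r) \<and> Sr x r d \<le> C n * Qs x (Suc n) (2*r)"
proof -
  have g: "\<gamma> (Suc n) \<le> \<gamma> n" using \<gamma>_dec by (simp add: decseq_Suc_iff)
  have dd: "\<delta> (Suc n) \<le> \<delta> n" using \<delta>_dec by (simp add: decseq_Suc_iff)
  have dg: "d \<le> \<gamma> n" using hi \<delta>_le_\<gamma>[of n] by simp
  have dS: "\<delta> (Suc n) > 0" by (rule \<delta>_pos)
  have M: "M n \<ge> 1" by (rule M_ge1)
  have Mcnt: "real (cnt t) \<le> M n" if "0 < t" "t \<le> 3*\<gamma> n/\<delta> (Suc n)" for t
    unfolding M_def using cnt_mono[OF that] by simp
  have tpos: "0 < (d + 2*\<gamma> m)/\<delta> m" "0 < (\<gamma> m + d)/d" for m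
    using d \<gamma>_pos[of m] \<delta>_pos[of m] by simp_all
  have Qs0: "Qs x m (2*r) \<ge> 0" for m unfolding Qs_def by (rule sum_nonneg) simp
  have Mle: "M n powr (q+1) \<le> C n"
  proof -
    have "M n powr (q+1) * 1 \<le> M n powr (q+1) * (real (cnt 2) + 1)" by (rule mult_left_mono) simp_all
    then show ?thesis unfolding C_def by simp
  qed
  have c2: "real (cnt ((\<gamma> m + d)/d)) \<le> M n" if "\<gamma> m \<le> \<gamma> n" for m
  proof (rule Mcnt[OF tpos(2)])
    have "(\<gamma> m + d)/d \<le> (2*\<gamma> n)/\<delta> (Suc n)"
      using that dg d lo dS by (intro frac_le) simp_all
    also have "\<dots> \<le> 3*\<gamma> n/\<delta> (Suc n)" using \<gamma>_pos[of n] dS by (intro divide_right_mono) simp_all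
    finally show "(\<gamma> m + d)/d \<le> 3*\<gamma> n/\<delta> (Suc n)" .
  qed
  have "Sr x r d \<le> M n powr (q+1) * Qs x n (2*r)"
  proof (rule core1[OF d dr M _ c2[OF order_refl]])
    show "real (cnt ((d + 2*\<gamma> n)/\<delta> n)) \<le> M n"
    proof (rule Mcnt[OF tpos(1)])
      show "(d + 2*\<gamma> n)/\<delta> n \<le> 3*\<gamma> n/\<delta> (Suc n)"
        using dg dS dd \<gamma>_pos[of n] by (intro frac_le) simp_all
    qed
  qed
  also have "\<dots> \<le> C n * Qs x n (2*r)" by (rule mult_right_mono[OF Mle Qs0])
  finally have A: "Sr x r d \<le> C n * Qs x n (2*r)" .
  have "Sr x r d \<le> M n powr (q+1) * Qs x (Suc n) (2*r)"
  proof (rule core1[OF d dr M _ c2[OF g]])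
    show "real (cnt ((d + 2*\<gamma> (Suc n))/\<delta> (Suc n))) \<le> M n"
    proof (rule Mcnt[OF tpos(1)])
      show "(d + 2*\<gamma> (Suc n))/\<delta> (Suc n) \<le> 3*\<gamma> n/\<delta> (Suc n)"
        using dg g dS by (intro divide_right_mono) simp_all
    qed
  qed
  also have "\<dots> \<le> C n * Qs x (Suc n) (2*r)" by (rule mult_right_mono[OF Mle Qs0])
  finally show ?thesis using A by blast
qed

end

context setting begin

lemma FQ_le_FS:
  fixes x :: 'a
  assumes x: "x \<in> spt \<mu>" and r: "r > 0"
  shows "Liminf sequentially (\<lambda>n. ereal (ln (Qs x n (2*r)) / ln (\<delta> n)))
    \<le> Liminf (at_right 0) (\<lambda>d. ereal (ln (Sr x r d) / ln d))"
proof (subst le_Liminf_iff, intro allI impI)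
  define g where "g n = ereal (ln (Qs x n (2*r)) / ln (\<delta> n))" for n
  fix y assume y: "y < Liminf sequentially (\<lambda>n. ereal (ln (Qs x n (2*r)) / ln (\<delta> n)))"
  show "\<forall>\<^sub>F d in at_right 0. y < ereal (ln (Sr x r d) / ln d)"
  proof (cases y)
    case MInf
    then show ?thesis by simp
  next
    case PInf
    then show ?thesis using y by simp
  next
    case (real y0)
    obtain z where z: "ereal y0 < ereal z" "ereal z < Liminf sequentially g"
      using ereal_dense2[OF y[folded g_def, unfolded real]] by blast
    have yz: "y0 - z < 0" using z(1) by simp
    have ev1: "eventually (\<lambda>n. ereal z < g n) sequentially"
      using le_Liminf_iff[THEN iffD1, OF order_refl] z(2) by blast
    have ev2: "eventually (\<lambda>n. ereal z < g (Suc n)) sequentially"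
      using eventually_sequentially_Suc[of "\<lambda>n. ereal z < g n"] ev1 by simp
    have ev3: "eventually (\<lambda>n. y0 - z < ln (C n) / ln (\<delta> n)) sequentially"
      using order_tendstoD(1)[OF lnC_lim yz] .
    have ev4: "eventually (\<lambda>n. y0 - z < ln (C n) / ln (\<delta> (Suc n))) sequentially"
      using order_tendstoD(1)[OF lnC_lim2 yz] .
    have "eventually (\<lambda>n. ereal z < g n \<and> ereal z < g (Suc n) \<and> y0 - z < ln (C n) / ln (\<delta> n)
        \<and> y0 - z < ln (C n) / ln (\<delta> (Suc n)) \<and> \<delta> n < 1) sequentially"
      using ev1 ev2 ev3 ev4 ev_delta_lt1 by (intro eventually_conj)
    then obtain n0 where H: "\<And>n. n \<ge> n0 \<Longrightarrow> ereal z < g n \<and> ereal z < g (Suc n) \<and> y0 - z < ln (C n) / ln (\<delta> n)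
        \<and> y0 - z < ln (C n) / ln (\<delta> (Suc n)) \<and> \<delta> n < 1"
      unfolding eventually_sequentially by blast
    have pos: "0 < min (\<delta> n0) r" using \<delta>_pos[of n0] r by simp
    have "\<forall>\<^sub>F d in at_right 0. d \<in> {0<..<min (\<delta> n0) r}" by (rule eventually_at_right_real[OF pos])
    then show ?thesis
    proof (rule eventually_mono)
      fix d assume "d \<in> {0<..<min (\<delta> n0) r}"
      then have d: "d > 0" "d < \<delta> n0" "d < r" by auto
      obtain n where n: "n \<ge> n0" "\<delta> (Suc n) \<le> d" "d < \<delta> n" using bracket[OF d(1,2)] by blast
      have Hn: "ereal z < g n" "ereal z < g (Suc n)" "y0 - z < ln (C n) / ln (\<delta> n)"
        "y0 - z < ln (C n) / ln (\<delta> (Suc n))" "\<delta> n < 1" using H[OF n(1)] by blast+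
      have u1: "z < ln (Qs x n (2*r)) / ln (\<delta> n)" using Hn(1) unfolding g_def by simp
      have u2: "z < ln (Qs x (Suc n) (2*r)) / ln (\<delta> (Suc n))" using Hn(2) unfolding g_def by simp
      have bnd: "Sr x r d \<le> C n * Qs x n (2*r) \<and> Sr x r d \<le> C n * Qs x (Suc n) (2*r)"
        by (rule Sr_two[OF d(1) _ n(2,3)]) (use d in simp)
      have Sp: "Sr x r d > 0" by (rule Sr_pos[OF x d(1)]) (use r in simp)
      have Q1: "Qs x n (2*r) > 0" "Qs x (Suc n) (2*r) > 0" using Qs_pos[OF x] r by simp_all
      have Cp: "C n > 0" using C_ge1[of n] by simp
      have s1: "ln (Sr x r d) \<le> ln (C n) + ln (Qs x n (2*r))"
        by (rule ln_prod_le[OF Sp Q1(1) Cp]) (use bnd in blast)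
      have s2: "ln (Sr x r d) \<le> ln (C n) + ln (Qs x (Suc n) (2*r))"
        by (rule ln_prod_le[OF Sp Q1(2) Cp]) (use bnd in blast)
      have dn1: "\<delta> (Suc n) < 1" using n(2) n(3) Hn(5) by simp
      have l1: "ln d < ln (\<delta> n)" using d(1) n(3) by simp
      have l2: "ln (\<delta> n) < 0" using Hn(5) \<delta>_pos[of n] by simp
      have l3: "ln (\<delta> (Suc n)) \<le> ln d" using n(2) \<delta>_pos[of "Suc n"] by simp
      have l4: "ln d < 0" using l1 l2 by simp
      have l5: "ln (\<delta> (Suc n)) < 0" using l3 l4 by simp
      have "y0 < ln (Sr x r d) / ln d"
      proof (cases "ln (Sr x r d) \<ge> 0")
        case True
        have "ln (Sr x r d) / ln (\<delta> n) \<le> ln (Sr x r d) / ln d"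
          by (rule helper1[OF True less_imp_le[OF l1] l2])
        moreover have "ln (C n) / ln (\<delta> n) + ln (Qs x n (2*r)) / ln (\<delta> n) \<le> ln (Sr x r d) / ln (\<delta> n)"
          by (rule helper3[OF s1 l2])
        ultimately show ?thesis using Hn(3) u1 by linarith
      next
        case False
        have "ln (Sr x r d) / ln (\<delta> (Suc n)) \<le> ln (Sr x r d) / ln d"
          by (rule helper2[OF _ l3 l4]) (use False in simp)
        moreover have "ln (C n) / ln (\<delta> (Suc n)) + ln (Qs x (Suc n) (2*r)) / ln (\<delta> (Suc n)) \<le> ln (Sr x r d) / ln (\<delta> (Suc n))"
          by (rule helper3[OF s2 l5])
        ultimately show ?thesis using Hn(4) u2 by linarith
      qed
      then show "y < ereal (ln (Sr x r d) / ln d)" unfolding real by simp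
    qed
  qed
qed

lemma FS_le_FQ:
  fixes x :: 'a
  assumes x: "x \<in> spt \<mu>" and r: "r > 0"
  shows "Liminf (at_right 0) (\<lambda>d. ereal (ln (Sr x (2*r) d) / ln d))
    \<le> Liminf sequentially (\<lambda>n. ereal (ln (Qs x n r) / ln (\<delta> n)))"
proof (subst le_Liminf_iff, intro allI impI)
  define f where "f d = ereal (ln (Sr x (2*r) d) / ln d)" for d
  fix y assume y: "y < Liminf (at_right 0) (\<lambda>d. ereal (ln (Sr x (2*r) d) / ln d))"
  show "\<forall>\<^sub>F n in sequentially. y < ereal (ln (Qs x n r) / ln (\<delta> n))"
  proof (cases y)
    case MInf
    then show ?thesis by simp
  next
    case PInf
    then show ?thesis using y by simp
  next
    case (real y0)
    obtain z where z: "ereal y0 < ereal z" "ereal z < Liminf (at_right 0) f"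
      using ereal_dense2[OF y[folded f_def, unfolded real]] by blast
    have yz: "y0 - z < 0" using z(1) by simp
    have evd: "eventually (\<lambda>d. ereal z < f d) (at_right 0)"
      using le_Liminf_iff[THEN iffD1, OF order_refl] z(2) by blast
    have ev1: "eventually (\<lambda>n. ereal z < f (\<delta> n)) sequentially"
      using filterlim_iff[THEN iffD1, OF delta_filterlim] evd by blast
    have ev3: "eventually (\<lambda>n. y0 - z < ln (C n) / ln (\<delta> n)) sequentially"
      using order_tendstoD(1)[OF lnC_lim yz] .
    have r2: "r/2 > 0" using r by simp
    have ev5: "eventually (\<lambda>n. \<gamma> n < r/2) sequentially"
      using order_tendstoD(2)[OF \<gamma>_lim r2] .
    have "eventually (\<lambda>n. ereal z < f (\<delta> n) \<and> y0 - z < ln (C n) / ln (\<delta> n) \<and> \<gamma> n < r/2 \<and> \<delta> n < 1) sequentially"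
      using ev1 ev3 ev5 ev_delta_lt1 by (intro eventually_conj)
    then show ?thesis
    proof (rule eventually_mono)
      fix n assume Hn: "ereal z < f (\<delta> n) \<and> y0 - z < ln (C n) / ln (\<delta> n) \<and> \<gamma> n < r/2 \<and> \<delta> n < 1"
      have u: "z < ln (Sr x (2*r) (\<delta> n)) / ln (\<delta> n)" using Hn unfolding f_def by simp
      have g: "2*\<gamma> n \<le> r" using Hn by simp
      have dS: "\<delta> (Suc n) > 0" by (rule \<delta>_pos)
      have dd: "\<delta> (Suc n) \<le> \<delta> n" using \<delta>_dec by (simp add: decseq_Suc_iff)
      have dg: "\<delta> n \<le> \<gamma> n" by (rule \<delta>_le_\<gamma>)
      have Mcnt: "real (cnt t) \<le> M n" if "0 < t" "t \<le> 3*\<gamma> n/\<delta> (Suc n)" for t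
        unfolding M_def using cnt_mono[OF that] by simp
      have c1: "real (cnt ((\<delta> n + 2*\<gamma> n)/\<delta> n)) \<le> M n"
      proof (rule Mcnt)
        show "0 < (\<delta> n + 2*\<gamma> n)/\<delta> n" using \<delta>_pos[of n] \<gamma>_pos[of n] by simp
        show "(\<delta> n + 2*\<gamma> n)/\<delta> n \<le> 3*\<gamma> n/\<delta> (Suc n)"
          using dg dS dd \<gamma>_pos[of n] by (intro frac_le) simp_all
      qed
      have c2: "real (cnt ((\<gamma> n + \<delta> n)/\<delta> n)) \<le> M n"
      proof (rule Mcnt)
        show "0 < (\<gamma> n + \<delta> n)/\<delta> n" using \<delta>_pos[of n] \<gamma>_pos[of n] by simp
        show "(\<gamma> n + \<delta> n)/\<delta> n \<le> 3*\<gamma> n/\<delta> (Suc n)"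
          using dg dS dd \<gamma>_pos[of n] by (intro frac_le) simp_all
      qed
      have "Qs x n r \<le> M n powr (q+1) * ((real (cnt 2) + 1) * Sr x (2*r) (\<delta> n))"
        by (rule core2[OF x r g M_ge1 c1 c2])
      then have bnd: "Qs x n r \<le> C n * Sr x (2*r) (\<delta> n)" unfolding C_def by (simp add: mult.assoc)
      have Sp: "Sr x (2*r) (\<delta> n) > 0" by (rule Sr_pos[OF x \<delta>_pos]) (use r in simp)
      have Qp: "Qs x n r > 0" by (rule Qs_pos[OF x r])
      have Cp: "C n > 0" using C_ge1[of n] by simp
      have s: "ln (Qs x n r) \<le> ln (C n) + ln (Sr x (2*r) (\<delta> n))" by (rule ln_prod_le[OF Qp Sp Cp bnd])
      have l2: "ln (\<delta> n) < 0" using Hn \<delta>_pos[of n] by simp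
      have "ln (C n) / ln (\<delta> n) + ln (Sr x (2*r) (\<delta> n)) / ln (\<delta> n) \<le> ln (Qs x n r) / ln (\<delta> n)"
        by (rule helper3[OF s l2])
      then have "y0 < ln (Qs x n r) / ln (\<delta> n)" using Hn u by linarith
      then show "y < ereal (ln (Qs x n r) / ln (\<delta> n))" unfolding real by simp
    qed
  qed
qed

end

context setting begin

lemma Sr_mono:
  fixes x :: 'a
  assumes d: "d > 0" and r1: "0 \<le> r1" and r12: "r1 \<le> r2"
  shows "Sr x r1 d \<le> Sr x r2 d"
proof -
  have r2: "0 \<le> r2" using r1 r12 by linarith
  have sub: "{\<B>. delta_packing d (cball x r1 \<inter> spt \<mu>) \<B>} \<subseteq> {\<B>. delta_packing d (cball x r2 \<inter> spt \<mu>) \<B>}"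
  proof
    fix \<B> assume "\<B> \<in> {\<B>. delta_packing d (cball x r1 \<inter> spt \<mu>) \<B>}"
    then have P: "delta_packing d (cball x r1 \<inter> spt \<mu>) \<B>" by simp
    have cb: "cball x r1 \<inter> spt \<mu> \<subseteq> cball x r2 \<inter> spt \<mu>" using r12 by auto
    have "\<forall>B\<in>\<B>. \<exists>c\<in>cball x r2 \<inter> spt \<mu>. B = cball c d"
    proof
      fix B assume "B \<in> \<B>"
      then obtain c where "c \<in> cball x r1 \<inter> spt \<mu>" "B = cball c d" using P unfolding delta_packing_def by blast
      then show "\<exists>c\<in>cball x r2 \<inter> spt \<mu>. B = cball c d" using cb by blast
    qed
    then show "\<B> \<in> {\<B>. delta_packing d (cball x r2 \<inter> spt \<mu>) \<B>}" using P unfolding delta_packing_def by simp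
  qed
  have "S_q \<mu> q (cball x r1) d \<le> S_q \<mu> q (cball x r2) d"
    unfolding S_q_def by (rule SUP_subset_mono[OF sub order_refl])
  moreover have "S_q \<mu> q (cball x r2) d < top" using S_fin[OF d r2] by (simp add: top.not_eq_extremum)
  ultimately show ?thesis unfolding Sr_def by (rule enn2real_mono)
qed

lemma FS_mono:
  fixes x :: 'a
  assumes x: "x \<in> spt \<mu>" and r1: "0 < r1" and r12: "r1 \<le> r2"
  shows "Liminf (at_right 0) (\<lambda>d. ereal (ln (Sr x r2 d) / ln d)) \<le> Liminf (at_right 0) (\<lambda>d. ereal (ln (Sr x r1 d) / ln d))"
proof (rule Liminf_mono)
  have "\<forall>\<^sub>F d in at_right 0. d \<in> {0<..<1::real}" by (rule eventually_at_right_real) simp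
  then show "\<forall>\<^sub>F d in at_right 0. ereal (ln (Sr x r2 d) / ln d) \<le> ereal (ln (Sr x r1 d) / ln d)"
  proof (rule eventually_mono)
    fix d :: real assume "d \<in> {0<..<1}"
    then have d: "d > 0" "d < 1" by auto
    have p: "Sr x r1 d > 0" by (rule Sr_pos[OF x d(1)]) (use r1 in simp)
    have "Sr x r1 d \<le> Sr x r2 d" by (rule Sr_mono[OF d(1) _ r12]) (use r1 in simp)
    then have "ln (Sr x r1 d) \<le> ln (Sr x r2 d)" using p by simp
    moreover have "ln d \<le> 0" using d by simp
    ultimately have "ln (Sr x r2 d) / ln d \<le> ln (Sr x r1 d) / ln d" by (rule divide_right_mono_neg)
    then show "ereal (ln (Sr x r2 d) / ln d) \<le> ereal (ln (Sr x r1 d) / ln d)" by simp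
  qed
qed

lemma scale_filterlim: "c > 0 \<Longrightarrow> filterlim (\<lambda>r::real. c * r) (at_right 0) (at_right 0)"
proof -
  assume c: "c > 0"
  have "((\<lambda>r::real. c * r) \<longlongrightarrow> c * 0) (at_right 0)" by (intro tendsto_intros)
  then have lim: "((\<lambda>r::real. c * r) \<longlongrightarrow> 0) (at_right 0)" by simp
  have "\<forall>\<^sub>F r in at_right (0::real). 0 < r" by (rule eventually_at_right_less)
  then have "\<forall>\<^sub>F r in at_right (0::real). 0 < c * r" by (rule eventually_mono) (use c in simp)
  then show ?thesis by (rule tendsto_imp_filterlim_at_right[OF lim])
qed

lemma conv:
  fixes x :: 'a
  assumes x: "x \<in> spt \<mu>"
  shows "((\<lambda>r. Liminf sequentially (\<lambda>n. ereal (ln (Qs x n r) / ln (\<delta> n))))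
     \<longlongrightarrow> Lim (at_right 0) (\<lambda>r. Liminf (at_right 0) (\<lambda>d. ereal (ln (Sr x r d) / ln d)))) (at_right 0)"
proof -
  define FS where "FS = (\<lambda>r. Liminf (at_right 0) (\<lambda>d. ereal (ln (Sr x r d) / ln d)))"
  define FQ where "FQ = (\<lambda>r. Liminf sequentially (\<lambda>n. ereal (ln (Qs x n r) / ln (\<delta> n))))"
  define L where "L = Sup (FS ` {0<..})"
  have FSm: "FS r2 \<le> FS r1" if "0 < r1" "r1 \<le> r2" for r1 r2
    unfolding FS_def by (rule FS_mono[OF x that])
  have FS_lim: "(FS \<longlongrightarrow> L) (at_right 0)"
  proof (rule order_tendstoI)
    fix a assume a: "a < L"
    have "\<exists>y\<in>FS ` {0<..}. a < y" using a unfolding L_def by (simp add: less_Sup_iff)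
    then obtain r0 where r0: "r0 \<in> {0<..}" "a < FS r0" by blast
    have "\<forall>\<^sub>F r in at_right 0. r \<in> {0<..<r0}" by (rule eventually_at_right_real) (use r0 in simp)
    then show "\<forall>\<^sub>F r in at_right 0. a < FS r"
    proof (rule eventually_mono)
      fix r assume "r \<in> {0<..<r0}"
      then have le: "FS r0 \<le> FS r" by (intro FSm) auto
      show "a < FS r" by (rule order.strict_trans2[OF r0(2) le])
    qed
  next
    fix a assume a: "L < a"
    have "\<forall>\<^sub>F r in at_right (0::real). 0 < r" by (rule eventually_at_right_less)
    then show "\<forall>\<^sub>F r in at_right 0. FS r < a"
    proof (rule eventually_mono)
      fix r :: real assume "0 < r"
      then have le: "FS r \<le> L" unfolding L_def by (intro Sup_upper) simp
      show "FS r < a" by (rule order.strict_trans1[OF le a])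
    qed
  qed
  have LimL: "Lim (at_right 0) FS = L" by (rule tendsto_Lim[OF trivial_limit_at_right_real FS_lim])
  have low: "((\<lambda>r. FS (2*r)) \<longlongrightarrow> L) (at_right 0)"
    using filterlim_compose[OF FS_lim scale_filterlim[of 2]] by simp
  have up: "((\<lambda>r. FS ((1/2)*r)) \<longlongrightarrow> L) (at_right 0)"
    using filterlim_compose[OF FS_lim scale_filterlim[of "1/2"]] by simp
  have "(FQ \<longlongrightarrow> L) (at_right 0)"
  proof (rule tendsto_sandwich[OF _ _ low up])
    have "\<forall>\<^sub>F r in at_right (0::real). 0 < r" by (rule eventually_at_right_less)
    then show "\<forall>\<^sub>F r in at_right 0. FS (2*r) \<le> FQ r"
    proof (rule eventually_mono)
      fix r :: real assume r: "0 < r"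
      show "FS (2*r) \<le> FQ r" unfolding FS_def FQ_def by (rule FS_le_FQ[OF x r])
    qed
    have "\<forall>\<^sub>F r in at_right (0::real). 0 < r" by (rule eventually_at_right_less)
    then show "\<forall>\<^sub>F r in at_right 0. FQ r \<le> FS ((1/2)*r)"
    proof (rule eventually_mono)
      fix r :: real assume r: "0 < r"
      have "FQ (2*((1/2)*r)) \<le> FS ((1/2)*r)" unfolding FS_def FQ_def by (rule FQ_le_FS[OF x]) (use r in simp)
      then show "FQ r \<le> FS ((1/2)*r)" by simp
    qed
  qed
  then show ?thesis using LimL unfolding FS_def FQ_def by (simp only:)
qed

end

theorem proposition3p2:
  fixes \<mu> :: "'a::complete_space set \<Rightarrow> ennreal"
    and \<delta> \<gamma> :: "nat \<Rightarrow> real"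
    and Q :: "nat \<Rightarrow> 'a set set"
    and E :: "'a set"
    and q :: real
  assumes doubling: "doubling_space TYPE('a)"
    and \<delta>_pos: "\<And>n. \<delta> n > 0" and \<delta>_dec: "decseq \<delta>"
    and \<gamma>_pos: "\<And>n. \<gamma> n > 0" and \<gamma>_dec: "decseq \<gamma>"
    and \<delta>_le_\<gamma>: "\<And>n. \<delta> n \<le> \<gamma> n"
    and \<gamma>_lim: "\<gamma> \<longlonglongrightarrow> 0"
    and \<delta>_ratio: "(\<lambda>n. ln (\<delta> n) / ln (\<delta> (Suc n))) \<longlonglongrightarrow> 1"
    and \<gamma>\<delta>_ratio: "(\<lambda>n. ln (\<gamma> n) / ln (\<delta> n)) \<longlonglongrightarrow> 1"
    and Q_disj: "\<And>n. \<forall>A\<in>Q n. \<forall>B\<in>Q n. A \<noteq> B \<longrightarrow> A \<inter> B = {}"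
    and Q_borel: "\<And>n. Q n \<subseteq> sets borel"
    and Q_inner: "\<And>n A. A \<in> Q n \<Longrightarrow> \<exists>c. cball c (\<delta> n) \<subseteq> A"
    and Q_outer: "\<And>n A. A \<in> Q n \<Longrightarrow> \<exists>c. A \<subseteq> cball c (\<gamma> n)"
    and E_def: "E = (\<Inter>n. \<Union>(Q n))"
    and \<mu>_meas: "is_measure \<mu>"
    and \<mu>_nonatomic: "\<And>y. \<mu> {y} = 0"
    and \<mu>_E: "\<mu> (UNIV - E) = 0"
    and q_nonneg: "q \<ge> 0"
  shows "\<forall>x\<in>spt \<mu>.
    ((\<lambda>r. Liminf sequentially (\<lambda>n.
        ereal (ln (enn2real (\<Sum>\<^sub>\<infinity>A\<in>{A\<in>Q n. A \<inter> cball x r \<noteq> {}}. mpow \<mu> q A)) / ln (\<delta> n))))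
      \<longlongrightarrow> tau_q \<mu> q x) (at_right 0)"
proof -
  obtain N0 where N0: "\<forall>(x::'a) r. r > 0 \<longrightarrow> (\<exists>C. finite C \<and> card C \<le> N0 \<and> cball x r \<subseteq> (\<Union>c\<in>C. cball c (r/2)))"
    using doubling unfolding doubling_space_def by (elim exE) (rule that)
  define N where "N = max N0 1"
  have N1: "N \<ge> 1" unfolding N_def by simp
  have D: "\<forall>(x::'a) r. r > 0 \<longrightarrow> (\<exists>C. finite C \<and> card C \<le> N \<and> cball x r \<subseteq> (\<Union>c\<in>C. cball c (r/2)))"
  proof (intro allI impI)
    fix x :: 'a and r :: real assume r: "r > 0"
    obtain C where C: "finite C" "card C \<le> N0" "cball x r \<subseteq> (\<Union>c\<in>C. cball c (r/2))" using N0 r by blast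
    have "card C \<le> N" using C(2) unfolding N_def by simp
    then show "\<exists>C. finite C \<and> card C \<le> N \<and> cball x r \<subseteq> (\<Union>c\<in>C. cball c (r/2))" using C(1,3) by blast
  qed
  have cov: "\<And>(x::'a) r k. r>0 \<Longrightarrow> \<exists>C. finite C \<and> card C \<le> N^k \<and> cball x r \<subseteq> (\<Union>c\<in>C. cball c (r/2^k))"
    by (rule doubling_iter[OF D])
  interpret S: setting \<mu> \<delta> \<gamma> Q E q N
    by (rule setting.intro) (fact cov N1 \<delta>_pos \<delta>_dec \<gamma>_pos \<gamma>_dec \<delta>_le_\<gamma> \<gamma>_lim \<delta>_ratio \<gamma>\<delta>_ratio Q_disj Q_inner Q_outer E_def \<mu>_meas \<mu>_E q_nonneg)+
  show ?thesis
  proof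
    fix x assume x: "x \<in> spt \<mu>"
    have lim: "((\<lambda>r. Liminf sequentially (\<lambda>n. ereal (ln (S.Qs x n r) / ln (\<delta> n))))
       \<longlongrightarrow> Lim (at_right 0) (\<lambda>r. Liminf (at_right 0) (\<lambda>d. ereal (ln (S.Sr x r d) / ln d)))) (at_right 0)"
      by (rule S.conv[OF x])
    have tau: "tau_q \<mu> q x = Lim (at_right 0) (\<lambda>r. Liminf (at_right 0) (\<lambda>d. ereal (ln (S.Sr x r d) / ln d)))"
      unfolding tau_q_def S.Sr_def ..
    have ev: "\<forall>\<^sub>F r in at_right 0. Liminf sequentially (\<lambda>n. ereal (ln (S.Qs x n r) / ln (\<delta> n))) =
       Liminf sequentially (\<lambda>n. ereal (ln (enn2real (\<Sum>\<^sub>\<infinity>A\<in>{A\<in>Q n. A \<inter> cball x r \<noteq> {}}. mpow \<mu> q A)) / ln (\<delta> n)))"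
    proof -
      have "\<forall>\<^sub>F r in at_right (0::real). 0 < r" by (rule eventually_at_right_less)
      then show ?thesis
      proof (rule eventually_mono)
        fix r :: real assume r: "0 < r"
        have "\<And>n. S.Qs x n r = enn2real (\<Sum>\<^sub>\<infinity>A\<in>{A\<in>Q n. A \<inter> cball x r \<noteq> {}}. mpow \<mu> q A)"
          using S.Qs_eq[of r] r by simp
        then show "Liminf sequentially (\<lambda>n. ereal (ln (S.Qs x n r) / ln (\<delta> n))) =
          Liminf sequentially (\<lambda>n. ereal (ln (enn2real (\<Sum>\<^sub>\<infinity>A\<in>{A\<in>Q n. A \<inter> cball x r \<noteq> {}}. mpow \<mu> q A)) / ln (\<delta> n)))"
          by simp
      qed
    qed
    show "((\<lambda>r. Liminf sequentially (\<lambda>n.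
        ereal (ln (enn2real (\<Sum>\<^sub>\<infinity>A\<in>{A\<in>Q n. A \<inter> cball x r \<noteq> {}}. mpow \<mu> q A)) / ln (\<delta> n))))
      \<longlongrightarrow> tau_q \<mu> q x) (at_right 0)"
      unfolding tau by (rule Lim_transform_eventually[OF lim ev])
  qed
qed

end
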